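(* Let $\{X_k\},\{V_k\},\{\mu_k\}$ be generated by the SMPG algorithm with $\bar\mu=0$, and let $\mathbb{K}=\{k\in\mathbb{N}:\|V_k\|_{\mathrm F}\le\mu_k^2\}$. There is a constant $C>0$ depending only on the problem data and on $\mu_0,\theta,\beta$ and the retraction (not on $\epsilon$) such that for every $\epsilon\in(0,1)$ with $\mu_0\ge\epsilon$ there exists an index $k\in\mathbb{K}$ with $k\le C\epsilon^{-3}$ and $\mu_k\le\epsilon$; for any such $k$, $\|V_k\|_{\mathrm F}\le\epsilon^2$ and $X_k$ is an $\epsilon$-approximate stationary point of $\min_{X\in\mathcal{O}^{d,r}}f(X)$, certified by $V=V_k$ and $\mu=\mu_k$.
   Context: Setting. $1\le r<d$, $\mathcal{O}^{d,r}=\{X\in\mathbb{R}^{d\times r}:X^\top X=I_r\}$, $\mathcal{T}_X\mathcal{O}^{d,r}=\{D:X^\top D+D^\top X=0\}$, $\mathrm{Proj}_{\mathcal{T}_X}(V)=V-X(X^\top V+V^\top X)/2$, and $\mathrm{grad}\,F(X)=\mathrm{Proj}_{\mathcal{T}_X}(\nabla F(X))$ for smooth $F$. Problem: $f(X)=u(X)+s(X)+w(X)$, where $u:\mathbb{R}^{d\times r}\to\mathbb{R}$ is continuously differentiable with $L_u$-Lipschitz gradient; $s:\mathbb{R}^{d\times r}\to\mathbb{R}$ is convex and $L_s$-Lipschitz (with convex subdifferential $\partial s$); $w(X)=2\rho\|(I_d-XX^\top)\Sigma_\circ^{1/2}\|_{\mathrm F}$ with $\Sigma_\circ\in\mathbb{S}_+^d$,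 $\rho>0$. Smoothing: $\tilde w(X,\mu)=w(X)$ if $w(X)\ge\mu\rho$, $\tilde w(X,\mu)=\frac{w(X)^2}{2\mu\rho}+\frac{\mu\rho}{2}$ otherwise; $\tilde g(X,\mu)=u(X)+\tilde w(X,\mu)$, $\tilde f(X,\mu)=\tilde g(X,\mu)+s(X)$; $\nabla$ is the Euclidean gradient in $X$ and $\mathrm{grad}\,\tilde w(X,\mu)$ the Riemannian gradient of $\tilde w(\cdot,\mu)$. A point $X\in\mathcal{O}^{d,r}$ is an $\epsilon$-approximate stationary point if there exist $V\in\mathcal{T}_X\mathcal{O}^{d,r}$ with $\|V\|_{\mathrm F}\le\epsilon$ and $\mu\in(0,\epsilon]$ such that $\mathrm{dist}\big(0,\mathrm{grad}\,u(X)+\mathrm{grad}\,\tilde w(X,\mu)+\mathrm{Proj}_{\mathcal{T}_X}(\partial s(X+V))\big)\le\epsilon$. A retraction is a smooth map $\mathfrak{R}$ on the tangent bundle of $\mathcal{O}^{d,r}$ with $\mathfrak{R}_X(0)=X$ and $\mathrm{D}\mathfrak{R}_X(0)=\mathrm{id}$. SMPG algorithm: inputs $X_0\in\mathcal{O}^{d,r}$, $\mu_0>0$, $\bar\mu\in[0,\mu_0]$, $\theta\in(0,1)$, $\beta\in(0,1)$. For $k=0,1,\dots$: compute $V_k=\arg\min_{V\in\mathcal{T}_{X_k}\mathcal{O}^{d,r}}\langle\nabla\tilde g(X_k,\mu_k),V\rangle+\frac{1}{2\mu_k}\|V\|_{\mathrm F}^2+s(X_k+V)$; if $\|V_k\|_{\mathrm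 F}\le\bar\mu^2$ and $\mu_k\le\bar\mu$, stop and return $X_k$; otherwise set $\alpha_k=\beta^{m_k}$ with $m_k$ the smallest nonnegative integer such that $\tilde f(\mathfrak{R}_{X_k}(\beta^{m_k}V_k),\mu_k)\le\tilde f(X_k,\mu_k)-\frac{\beta^{m_k}}{2\mu_k}\|V_k\|_{\mathrm F}^2$, set $X_{k+1}=\mathfrak{R}_{X_k}(\alpha_kV_k)$, and set $\mu_{k+1}=\mu_k$ if $\|V_k\|_{\mathrm F}>\mu_k^2$, $\mu_{k+1}=\theta\mu_k$ if $\|V_k\|_{\mathrm F}\le\mu_k^2$. *)

theory Defs
  imports "HOL-Analysis.Analysis"
begin

(* d x r matrices are  real^'r^'d ; the norm / inner product on this type are the
   Frobenius norm / Frobenius inner product. *)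

definition stiefel :: "(real^'r^'d) set" where
  "stiefel = {X. transpose X ** X = mat 1}"

definition tangent :: "real^'r^'d \<Rightarrow> (real^'r^'d) set" where
  "tangent X = {D. transpose X ** D + transpose D ** X = 0}"

definition proj_tan :: "real^'r^'d \<Rightarrow> real^'r^'d \<Rightarrow> real^'r^'d" where
  "proj_tan X V = V - (1/2) *\<^sub>R (X ** (transpose X ** V + transpose V ** X))"

definition egrad :: "('a::real_inner \<Rightarrow> real) \<Rightarrow> 'a \<Rightarrow> 'a" where
  "egrad F X = (THE G. (F has_derivative (\<lambda>H. G \<bullet> H)) (at X))"

definition rgrad :: "(real^'r^'d \<Rightarrow> real) \<Rightarrow> real^'r^'d \<Rightarrow> real^'r^'d" where
  "rgrad F X = proj_tan X (egrad F X)"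

definition subdiff :: "('a::real_inner \<Rightarrow> real) \<Rightarrow> 'a \<Rightarrow> 'a set" where
  "subdiff s X = {G. \<forall>Y. s X + G \<bullet> (Y - X) \<le> s Y}"

(* smooth (C^infinity) on an open set U: there are iterated Frechet derivatives
   D n x [h1,...,hn] = D^n f(x)[h1,...,hn] of every order, with D 0 x [] = f x and
   D (n+1) x (h # hs) the derivative in direction h of y |-> D n y hs *)
definition smooth_on :: "('a::real_normed_vector \<Rightarrow> 'b::real_normed_vector) \<Rightarrow> 'a set \<Rightarrow> bool" where
  "smooth_on f U \<longleftrightarrow> (\<exists>D :: nat \<Rightarrow> 'a \<Rightarrow> 'a list \<Rightarrow> 'b.
      (\<forall>x\<in>U. D 0 x [] = f x) \<and>
      (\<forall>n hs. length hs = n \<longrightarrow>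
         continuous_on U (\<lambda>y. D n y hs) \<and>
         (\<forall>x\<in>U. ((\<lambda>y. D n y hs) has_derivative (\<lambda>h. D (Suc n) x (h # hs))) (at x))))"

(* retraction: smooth map on the tangent bundle (i.e. restriction of a smooth map on an
   open neighbourhood of the tangent bundle), mapping into the Stiefel manifold,
   with R_X(0) = X and DR_X(0) = id *)
definition retraction :: "(real^'r^'d \<Rightarrow> real^'r^'d \<Rightarrow> real^'r^'d) \<Rightarrow> bool" where
  "retraction Ret \<longleftrightarrow>
     (\<exists>U. open U \<and> {(X, D). X \<in> stiefel \<and> D \<in> tangent X} \<subseteq> U \<and>
          smooth_on (\<lambda>p. Ret (fst p) (snd p)) U) \<and>
     (\<forall>X\<in>stiefel. \<forall>D\<in>tangent X. Ret X D \<in> stiefel) \<and>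
     (\<forall>X\<in>stiefel. Ret X 0 = X) \<and>
     (\<forall>X\<in>stiefel. \<forall>D\<in>tangent X. ((\<lambda>t. Ret X (t *\<^sub>R D)) has_vector_derivative D) (at 0))"

(* w(X) = 2 rho || (I - X X^T) Sigma^{1/2} ||_F ; Sh stands for Sigma^{1/2} *)
definition wfun :: "real \<Rightarrow> real^'d^'d \<Rightarrow> real^'r^'d \<Rightarrow> real" where
  "wfun \<rho> Sh X = 2 * \<rho> * norm ((mat 1 - X ** transpose X) ** Sh)"

definition wsm :: "real \<Rightarrow> real^'d^'d \<Rightarrow> real^'r^'d \<Rightarrow> real \<Rightarrow> real" where
  "wsm \<rho> Sh X \<mu> = (if wfun \<rho> Sh X \<ge> \<mu> * \<rho> then wfun \<rho> Sh X
                    else (wfun \<rho> Sh X)\<^sup>2 / (2 * \<mu> * \<rho>) + \<mu> * \<rho> / 2)"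

definition gsm :: "(real^'r^'d \<Rightarrow> real) \<Rightarrow> real \<Rightarrow> real^'d^'d \<Rightarrow> real^'r^'d \<Rightarrow> real \<Rightarrow> real" where
  "gsm u \<rho> Sh X \<mu> = u X + wsm \<rho> Sh X \<mu>"

definition fsm :: "(real^'r^'d \<Rightarrow> real) \<Rightarrow> (real^'r^'d \<Rightarrow> real) \<Rightarrow> real \<Rightarrow> real^'d^'d \<Rightarrow> real^'r^'d \<Rightarrow> real \<Rightarrow> real" where
  "fsm u s \<rho> Sh X \<mu> = gsm u \<rho> Sh X \<mu> + s X"

definition eps_stat_cert ::
  "(real^'r^'d \<Rightarrow> real) \<Rightarrow> (real^'r^'d \<Rightarrow> real) \<Rightarrow> real \<Rightarrow> real^'d^'d \<Rightarrow> real \<Rightarrow> real^'r^'d \<Rightarrow> real^'r^'d \<Rightarrow> real \<Rightarrow> bool" where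
  "eps_stat_cert u s \<rho> Sh \<epsilon> X V \<mu> \<longleftrightarrow>
     V \<in> tangent X \<and> norm V \<le> \<epsilon> \<and> 0 < \<mu> \<and> \<mu> \<le> \<epsilon> \<and>
     infdist 0 {rgrad u X + rgrad (\<lambda>Y. wsm \<rho> Sh Y \<mu>) X + proj_tan X G | G. G \<in> subdiff s (X + V)} \<le> \<epsilon>"

definition eps_stationary ::
  "(real^'r^'d \<Rightarrow> real) \<Rightarrow> (real^'r^'d \<Rightarrow> real) \<Rightarrow> real \<Rightarrow> real^'d^'d \<Rightarrow> real \<Rightarrow> real^'r^'d \<Rightarrow> bool" where
  "eps_stationary u s \<rho> Sh \<epsilon> X \<longleftrightarrow> X \<in> stiefel \<and> (\<exists>V \<mu>. eps_stat_cert u s \<rho> Sh \<epsilon> X V \<mu>)"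

(* the SMPG iterates with mu_bar = 0 (the stopping test never fires since mu_k > 0) *)
definition smpg_run ::
  "(real^'r^'d \<Rightarrow> real) \<Rightarrow> (real^'r^'d \<Rightarrow> real) \<Rightarrow> real \<Rightarrow> real^'d^'d \<Rightarrow>
   (real^'r^'d \<Rightarrow> real^'r^'d \<Rightarrow> real^'r^'d) \<Rightarrow> real \<Rightarrow> real \<Rightarrow> real \<Rightarrow>
   (nat \<Rightarrow> real^'r^'d) \<Rightarrow> (nat \<Rightarrow> real^'r^'d) \<Rightarrow> (nat \<Rightarrow> real) \<Rightarrow> (nat \<Rightarrow> real) \<Rightarrow> bool" where
  "smpg_run u s \<rho> Sh Ret \<mu>0 \<theta> \<beta> X V \<mu> \<alpha> \<longleftrightarrow>
     X 0 \<in> stiefel \<and> \<mu> 0 = \<mu>0 \<and>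
     (\<forall>k.
        V k \<in> tangent (X k) \<and>
        (\<forall>W\<in>tangent (X k).
           egrad (\<lambda>Y. gsm u \<rho> Sh Y (\<mu> k)) (X k) \<bullet> V k + (norm (V k))\<^sup>2 / (2 * \<mu> k) + s (X k + V k)
           \<le> egrad (\<lambda>Y. gsm u \<rho> Sh Y (\<mu> k)) (X k) \<bullet> W + (norm W)\<^sup>2 / (2 * \<mu> k) + s (X k + W)) \<and>
        (\<exists>m::nat. \<alpha> k = \<beta> ^ m \<and>
           fsm u s \<rho> Sh (Ret (X k) (\<beta> ^ m *\<^sub>R V k)) (\<mu> k)
             \<le> fsm u s \<rho> Sh (X k) (\<mu> k) - \<beta> ^ m / (2 * \<mu> k) * (norm (V k))\<^sup>2 \<and>
           (\<forall>m'<m. \<not> (fsm u s \<rho> Sh (Ret (X k) (\<beta> ^ m' *\<^sub>R V k)) (\<mu> k)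
             \<le> fsm u s \<rho> Sh (X k) (\<mu> k) - \<beta> ^ m' / (2 * \<mu> k) * (norm (V k))\<^sup>2))) \<and>
        X (Suc k) = Ret (X k) (\<alpha> k *\<^sub>R V k) \<and>
        \<mu> (Suc k) = (if norm (V k) > (\<mu> k)\<^sup>2 then \<mu> k else \<theta> * \<mu> k))"

end

theory Submission
  imports Defs
begin

lemma inner_mat_eq: "(A::real^'n^'m) \<bullet> B = (\<Sum>i\<in>UNIV. \<Sum>j\<in>UNIV. A$i$j * B$i$j)"
  by (simp add: inner_vec_def)

lemma mm_inner1: "((A::real^'n^'m) ** (B::real^'p^'n)) \<bullet> C = B \<bullet> (transpose A ** C)"
proof -
  have "((A ** B) \<bullet> C) = (\<Sum>i\<in>UNIV. \<Sum>k\<in>UNIV. \<Sum>j\<in>UNIV. A$i$j * B$j$k * C$i$k)"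
    by (simp add: inner_mat_eq matrix_matrix_mult_def sum_distrib_right)
  also have "\<dots> = (\<Sum>j\<in>UNIV. \<Sum>k\<in>UNIV. \<Sum>i\<in>UNIV. A$i$j * B$j$k * C$i$k)"
  proof -
    have "\<And>i. (\<Sum>k\<in>UNIV. \<Sum>j\<in>UNIV. A$i$j * B$j$k * C$i$k) = (\<Sum>j\<in>UNIV. \<Sum>k\<in>UNIV. A$i$j * B$j$k * C$i$k)"
      by (rule sum.swap)
    then have "(\<Sum>i\<in>UNIV. \<Sum>k\<in>UNIV. \<Sum>j\<in>UNIV. A$i$j * B$j$k * C$i$k) = (\<Sum>i\<in>UNIV. \<Sum>j\<in>UNIV. \<Sum>k\<in>UNIV. A$i$j * B$j$k * C$i$k)"
      by simp
    also have "\<dots> = (\<Sum>j\<in>UNIV. \<Sum>i\<in>UNIV. \<Sum>k\<in>UNIV. A$i$j * B$j$k * C$i$k)"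
      by (rule sum.swap)
    also have "\<dots> = (\<Sum>j\<in>UNIV. \<Sum>k\<in>UNIV. \<Sum>i\<in>UNIV. A$i$j * B$j$k * C$i$k)"
      by (rule sum.cong[OF refl], rule sum.swap)
    finally show ?thesis .
  qed
  also have "\<dots> = B \<bullet> (transpose A ** C)"
    by (simp add: inner_mat_eq matrix_matrix_mult_def transpose_def sum_distrib_left mult.assoc mult.left_commute)
  finally show ?thesis .
qed

lemma inner_transpose: "transpose (A::real^'n^'m) \<bullet> transpose B = A \<bullet> B"
proof -
  have "transpose A \<bullet> transpose B = (\<Sum>j\<in>UNIV. \<Sum>i\<in>UNIV. A$i$j * B$i$j)"
    by (simp add: inner_mat_eq transpose_def)
  also have "\<dots> = A \<bullet> B" by (simp add: inner_mat_eq, rule sum.swap)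
  finally show ?thesis .
qed

lemma norm_transpose: "norm (transpose (A::real^'n^'m)) = norm A"
  by (simp add: norm_eq_sqrt_inner inner_transpose)

lemma mm_inner2: "((A::real^'n^'m) ** (B::real^'p^'n)) \<bullet> C = A \<bullet> (C ** transpose B)"
proof -
  have "(A ** B) \<bullet> C = transpose (A ** B) \<bullet> transpose C" by (simp add: inner_transpose)
  also have "\<dots> = (transpose B ** transpose A) \<bullet> transpose C" by (simp add: matrix_transpose_mul)
  also have "\<dots> = transpose A \<bullet> (B ** transpose C)" by (simp add: mm_inner1)
  also have "\<dots> = transpose A \<bullet> transpose (C ** transpose B)" by (simp add: matrix_transpose_mul)
  also have "\<dots> = A \<bullet> (C ** transpose B)" by (simp add: inner_transpose)
  finally show ?thesis .
qed

lemma norm_sq_mat: "(norm (A::real^'n^'m))^2 = (\<Sum>i\<in>UNIV. (norm (A$i))^2)"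
  by (simp add: power2_norm_eq_inner inner_vec_def)

lemma norm_mm_le: "norm ((A::real^'n^'m) ** (B::real^'p^'n)) \<le> norm A * norm B"
proof -
  have e: "(A ** B)$i$k = (A$i) \<bullet> (transpose B $ k)" for i k
    by (simp add: matrix_matrix_mult_def transpose_def inner_vec_def mult.commute)
  have "(norm (A ** B))^2 = (\<Sum>i\<in>UNIV. \<Sum>k\<in>UNIV. ((A$i) \<bullet> (transpose B $ k))^2)"
    unfolding power2_norm_eq_inner inner_mat_eq e[symmetric] by (simp add: power2_eq_square)
  also have "\<dots> \<le> (\<Sum>i\<in>UNIV. \<Sum>k\<in>UNIV. (norm (A$i))^2 * (norm (transpose B $ k))^2)"
  proof (intro sum_mono)
    fix i k
    have "\<bar>(A$i) \<bullet> (transpose B $ k)\<bar> \<le> norm (A$i) * norm (transpose B $ k)"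
      by (rule Cauchy_Schwarz_ineq2)
    then have "\<bar>(A$i) \<bullet> (transpose B $ k)\<bar>^2 \<le> (norm (A$i) * norm (transpose B $ k))^2"
      by (intro power_mono) auto
    then show "((A$i) \<bullet> (transpose B $ k))^2 \<le> (norm (A$i))^2 * (norm (transpose B $ k))^2"
      by (simp add: power_mult_distrib)
  qed
  also have "\<dots> = (norm A)^2 * (norm (transpose B))^2"
    by (simp add: norm_sq_mat sum_product)
  also have "\<dots> = (norm A * norm B)^2" by (simp add: norm_transpose power_mult_distrib)
  finally show ?thesis
    by (rule power2_le_imp_le) simp
qed

lemma bb_mm: "bounded_bilinear ((**) :: real^'n^'m \<Rightarrow> real^'p^'n \<Rightarrow> real^'p^'m)"
proof
  fix a a' :: "real^'n^'m" and b b' :: "real^'p^'n" and r :: real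
  show "(a + a') ** b = a ** b + a' ** b"
    by (vector matrix_matrix_mult_def sum.distrib[symmetric] field_simps)
  show "a ** (b + b') = a ** b + a ** b'" by (rule matrix_add_ldistrib)
  show "(r *\<^sub>R a) ** b = r *\<^sub>R (a ** b)" by (simp add: scalar_matrix_assoc)
  show "a ** (r *\<^sub>R b) = r *\<^sub>R (a ** b)" by (simp add: matrix_scalar_ac scalar_matrix_assoc)
next
  show "\<exists>K. \<forall>a b. norm ((a::real^'n^'m) ** (b::real^'p^'n)) \<le> norm a * norm b * K"
    by (rule exI[of _ 1]) (simp add: norm_mm_le)
qed

lemmas mm_diff_left = bounded_bilinear.diff_left[OF bb_mm]
lemmas mm_diff_right = bounded_bilinear.diff_right[OF bb_mm]
lemmas mm_add_left = bounded_bilinear.add_left[OF bb_mm]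
lemmas mm_add_right = bounded_bilinear.add_right[OF bb_mm]
lemmas mm_scaleR_left = bounded_bilinear.scaleR_left[OF bb_mm]
lemmas mm_scaleR_right = bounded_bilinear.scaleR_right[OF bb_mm]
lemmas mm_minus_left = bounded_bilinear.minus_left[OF bb_mm]
lemmas mm_minus_right = bounded_bilinear.minus_right[OF bb_mm]
lemmas mm_simps = mm_diff_left mm_diff_right mm_add_left mm_add_right mm_scaleR_left mm_scaleR_right
  mm_minus_left mm_minus_right

lemma bl_transpose: "bounded_linear (transpose :: real^'n^'m \<Rightarrow> real^'m^'n)"
proof
  fix a b :: "real^'n^'m" and r :: real
  show "transpose (a + b) = transpose a + transpose b" by (vector transpose_def)
  show "transpose (r *\<^sub>R a) = r *\<^sub>R transpose a" by (rule transpose_scalar)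
  show "\<exists>K. \<forall>x::real^'n^'m. norm (transpose x) \<le> norm x * K"
    by (rule exI[of _ 1]) (simp add: norm_transpose)
qed

lemmas tr_simps = linear_add[OF bounded_linear.linear[OF bl_transpose]]
  linear_diff[OF bounded_linear.linear[OF bl_transpose]]
  linear_neg[OF bounded_linear.linear[OF bl_transpose]]
  transpose_scalar

lemma tr_zero[simp]: "transpose (0::real^'n^'m) = 0"
  by (vector transpose_def)

lemma norm_stiefel: assumes "X \<in> stiefel" shows "(norm (X::real^'r^'d))^2 = real CARD('r)"
proof -
  have "(norm X)^2 = (X ** mat 1) \<bullet> X" by (simp add: power2_norm_eq_inner)
  also have "\<dots> = mat 1 \<bullet> (transpose X ** X)" by (rule mm_inner1)
  also have "\<dots> = mat 1 \<bullet> (mat 1 :: real^'r^'r)" using assms by (simp add: stiefel_def)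
  also have "\<dots> = real CARD('r)" by (simp add: inner_mat_eq mat_def if_distrib if_distribR cong: if_cong)
  finally show ?thesis .
qed

lemma norm_stiefel_le: assumes "X \<in> stiefel" shows "norm (X::real^'r^'d) = sqrt (real CARD('r))"
  using norm_stiefel[OF assms] by (metis norm_ge_zero real_sqrt_unique)

lemma proj_in_tangent:
  assumes X: "X \<in> stiefel"
  shows "proj_tan X V \<in> tangent X"
proof -
  define B where "B = transpose X ** V + transpose V ** X"
  have XX: "transpose X ** X = mat 1" using X by (simp add: stiefel_def)
  have Bs: "transpose B = B" by (simp add: B_def tr_simps matrix_transpose_mul)
  have P: "proj_tan X V = V - (1/2) *\<^sub>R (X ** B)" by (simp add: proj_tan_def B_def)
  have 1: "transpose X ** proj_tan X V = transpose X ** V - (1/2) *\<^sub>R B"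
    by (simp add: P mm_simps matrix_mul_assoc XX)
  have 2: "transpose (proj_tan X V) ** X = transpose V ** X - (1/2) *\<^sub>R B"
    by (simp add: P mm_simps tr_simps matrix_transpose_mul Bs matrix_mul_assoc[symmetric] XX)
  have "transpose X ** proj_tan X V + transpose (proj_tan X V) ** X =
     (transpose X ** V + transpose V ** X) - B"
  proof -
    have h: "(1/2) *\<^sub>R B + (1/2) *\<^sub>R B = B" by (simp add: scaleR_left_distrib[symmetric])
    show ?thesis unfolding 1 2 by (metis add_diff_add h)
  qed
  then show ?thesis unfolding tangent_def by (simp add: B_def)
qed

lemma proj_of_tangent: "V \<in> tangent X \<Longrightarrow> proj_tan X V = V"
  by (simp add: tangent_def proj_tan_def)

lemma inner_sym: "transpose (B::real^'n^'n) = B \<Longrightarrow> B \<bullet> C = B \<bullet> transpose C"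
  by (metis inner_transpose)

lemma normal_orth:
  assumes W: "W \<in> tangent X" and Bs: "transpose B = B"
  shows "(X ** B) \<bullet> W = 0"
proof -
  have "(X ** B) \<bullet> W = B \<bullet> (transpose X ** W)" by (rule mm_inner1)
  moreover have "B \<bullet> (transpose X ** W) = B \<bullet> (transpose W ** X)"
    using inner_sym[OF Bs, of "transpose X ** W"] by (simp add: matrix_transpose_mul)
  moreover have "B \<bullet> (transpose X ** W) + B \<bullet> (transpose W ** X) = 0"
    using W by (simp add: tangent_def inner_add_right[symmetric])
  ultimately show ?thesis by simp
qed

lemma proj_tan_linear: "linear (proj_tan X)"
  unfolding proj_tan_def
  by (rule linearI) (simp_all add: mm_simps tr_simps algebra_simps)

lemma proj_normal_zero:
  assumes X: "X \<in> stiefel" and G: "\<forall>W\<in>tangent X. G \<bullet> W = 0"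
  shows "proj_tan X G = 0"
proof -
  define B where "B = transpose X ** G + transpose G ** X"
  have Bs: "transpose B = B" by (simp add: B_def tr_simps matrix_transpose_mul)
  have P: "proj_tan X G = G - (1/2) *\<^sub>R (X ** B)" by (simp add: proj_tan_def B_def)
  have T: "proj_tan X G \<in> tangent X" by (rule proj_in_tangent[OF X])
  have "proj_tan X G \<bullet> proj_tan X G = G \<bullet> proj_tan X G - (1/2) * ((X ** B) \<bullet> proj_tan X G)"
    by (subst (1) P) (simp add: inner_diff_left)
  also have "\<dots> = 0" using G T normal_orth[OF T Bs] by simp
  finally show ?thesis by simp
qed

lemma egrad_eq:
  assumes "(F has_derivative (\<lambda>H. G \<bullet> H)) (at X)"
  shows "egrad F X = G"
  unfolding egrad_def
proof (rule the_equality)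
  show "(F has_derivative (\<lambda>H. G \<bullet> H)) (at X)" by (rule assms)
  fix G' assume "(F has_derivative (\<lambda>H. G' \<bullet> H)) (at X)"
  from has_derivative_unique[OF assms this] have "\<And>H. G \<bullet> H = G' \<bullet> H" by metis
  then have "G \<bullet> (G' - G) - G' \<bullet> (G' - G) = 0" by simp
  then have "(G' - G) \<bullet> (G' - G) = 0" by (simp add: inner_diff_left)
  then show "G' = G" by simp
qed

lemma linear_inner_rep:
  fixes L :: "'a::euclidean_space \<Rightarrow> real"
  assumes "linear L"
  shows "L = (\<lambda>H. (\<Sum>b\<in>Basis. L b *\<^sub>R b) \<bullet> H)"
proof
  fix H
  have "L H = L (\<Sum>b\<in>Basis. (H \<bullet> b) *\<^sub>R b)" by (simp add: euclidean_representation)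
  also have "\<dots> = (\<Sum>b\<in>Basis. (H \<bullet> b) * L b)"
    using assms by (simp add: linear_sum linear_scale)
  also have "\<dots> = (\<Sum>b\<in>Basis. L b *\<^sub>R b) \<bullet> H"
    by (simp add: inner_sum_right inner_commute mult.commute)
  finally show "L H = (\<Sum>b\<in>Basis. L b *\<^sub>R b) \<bullet> H" .
qed

lemma egrad_deriv:
  fixes F :: "'a::euclidean_space \<Rightarrow> real"
  assumes "(F has_derivative L) (at X)"
  shows "(F has_derivative (\<lambda>H. egrad F X \<bullet> H)) (at X)" "L = (\<lambda>H. egrad F X \<bullet> H)"
proof -
  have lin: "linear L" using assms has_derivative_linear by blast
  define G where "G = (\<Sum>b\<in>Basis. L b *\<^sub>R b)"
  have LG: "L = (\<lambda>H. G \<bullet> H)" unfolding G_def by (rule linear_inner_rep[OF lin])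
  have d: "(F has_derivative (\<lambda>H. G \<bullet> H)) (at X)" using assms LG by simp
  have e: "egrad F X = G" by (rule egrad_eq[OF d])
  show "(F has_derivative (\<lambda>H. egrad F X \<bullet> H)) (at X)" using d e by simp
  show "L = (\<lambda>H. egrad F X \<bullet> H)" using LG e by simp
qed

lemma egrad_differentiable:
  fixes F :: "'a::euclidean_space \<Rightarrow> real"
  assumes "F differentiable (at X)"
  shows "(F has_derivative (\<lambda>H. egrad F X \<bullet> H)) (at X)"
  using assms egrad_deriv(1) unfolding differentiable_def by blast

lemma quad_deriv:
  assumes bl: "bounded_linear L"
    and b: "\<And>y. norm (f y - f x - L (y - x)) \<le> K * (norm (y - x))^2"
  shows "(f has_derivative L) (at x)"
  unfolding has_derivative_iff_norm
proof (intro conjI bl)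
  show "((\<lambda>y. norm (f y - f x - L (y - x)) / norm (y - x)) \<longlongrightarrow> 0) (at x)"
  proof (rule Lim_null_comparison)
    show "\<forall>\<^sub>F y in at x. norm (norm (f y - f x - L (y - x)) / norm (y - x)) \<le> \<bar>K\<bar> * norm (y - x)"
    proof (rule always_eventually, rule allI)
      fix y
      show "norm (norm (f y - f x - L (y - x)) / norm (y - x)) \<le> \<bar>K\<bar> * norm (y - x)"
      proof (cases "y = x")
        case True then show ?thesis by simp
      next
        case False
        then have p: "norm (y - x) > 0" by simp
        have "norm (f y - f x - L (y - x)) \<le> \<bar>K\<bar> * norm (y - x) * norm (y - x)"
        proof -
          have "K * (norm (y - x))^2 \<le> \<bar>K\<bar> * (norm (y - x))^2"
            by (rule mult_right_mono) auto
          then show ?thesis using b[of y] by (simp add: power2_eq_square mult.assoc)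
        qed
        then show ?thesis using p by (simp add: divide_le_eq)
      qed
    qed
    have "((\<lambda>y. \<bar>K\<bar> * norm (y - x)) \<longlongrightarrow> \<bar>K\<bar> * norm (x - x)) (at x)"
      by (intro tendsto_intros)
    then show "((\<lambda>y. \<bar>K\<bar> * norm (y - x)) \<longlongrightarrow> 0) (at x)" by simp
  qed
qed

definition hub :: "real \<Rightarrow> 'a::real_normed_vector \<Rightarrow> real" where
  "hub r M = (if norm M \<ge> r then norm M else (norm M)^2 / (2*r) + r/2)"

definition hz :: "real \<Rightarrow> 'a::real_normed_vector \<Rightarrow> 'a" where
  "hz r M = (1 / max (norm M) r) *\<^sub>R M"

lemma hz_norm: assumes "r > 0" shows "norm (hz r M) \<le> 1"
  using assms by (auto simp: hz_def max_def divide_le_eq)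

lemma hub_sup:
  fixes Z N :: "'a::real_inner"
  assumes r: "r > 0" and Z: "norm Z \<le> 1"
  shows "Z \<bullet> N - r/2 * (norm Z)^2 + r/2 \<le> hub r N"
proof -
  have cs: "Z \<bullet> N \<le> norm Z * norm N" by (rule norm_cauchy_schwarz)
  define t where "t = norm Z"
  define n where "n = norm N"
  have t0: "0 \<le> t" "t \<le> 1" using Z by (auto simp: t_def)
  have n0: "0 \<le> n" by (simp add: n_def)
  show ?thesis
  proof (cases "norm N \<ge> r")
    case True
    then have "n \<ge> r" by (simp add: n_def)
    have f1: "(1-t)*(n-r) \<ge> 0" using t0 \<open>n \<ge> r\<close> by simp
    have f2: "r*(1-t)^2/2 \<ge> 0" using r by simp
    have "t*n - r/2*t^2 + r/2 - n = -((1-t)*(n-r) + r*(1-t)^2/2)"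
      by (simp add: power2_eq_square field_simps)
    then have "t * n - r/2 * t^2 + r/2 \<le> n" using f1 f2 by linarith
    then show ?thesis using cs True by (simp add: hub_def t_def n_def)
  next
    case False
    have "n^2/(2*r) - (t*n - r/2*t^2) = (r*t - n)^2/(2*r)" using r
      by (simp add: field_simps power2_eq_square)
    moreover have "(r*t - n)^2/(2*r) \<ge> 0" using r by simp
    ultimately have "t * n - r/2 * t^2 + r/2 \<le> n^2/(2*r) + r/2" by linarith
    then show ?thesis using cs False by (simp add: hub_def t_def n_def)
  qed
qed

lemma hub_eq:
  fixes M :: "'a::real_inner"
  assumes r: "r > 0"
  shows "hub r M = hz r M \<bullet> M - r/2 * (norm (hz r M))^2 + r/2"
proof (cases "norm M \<ge> r")
  case True
  then have p: "norm M > 0" using r by linarith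
  have "hz r M = (1 / norm M) *\<^sub>R M" using True by (simp add: hz_def max_def)
  then show ?thesis using True p
    by (simp add: hub_def power2_norm_eq_inner[symmetric]) (simp add: power2_eq_square)
next
  case False
  then have "hz r M = (1 / r) *\<^sub>R M" by (simp add: hz_def max_def)
  then show ?thesis using False r
    by (simp add: hub_def power2_norm_eq_inner[symmetric] power_divide field_simps power2_eq_square)
qed

lemma hub_lower:
  fixes M N :: "'a::real_inner"
  assumes r: "r > 0"
  shows "hub r M + hz r M \<bullet> (N - M) \<le> hub r N"
  using hub_sup[OF r hz_norm[OF r], of M N] hub_eq[OF r, of M]
  by (simp add: inner_diff_right)

lemma hz_closest:
  fixes M :: "'a::euclidean_space"
  assumes r: "r > 0"
  shows "hz r M = (1/r) *\<^sub>R closest_point (cball 0 r) M"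
proof -
  define x where "x = (r / max (norm M) r) *\<^sub>R M"
  have xin: "x \<in> cball 0 r" using r by (auto simp: x_def max_def divide_le_eq)
  have "\<forall>z\<in>cball 0 r. dist M x \<le> dist M z"
  proof
    fix z :: 'a assume z: "z \<in> cball 0 r"
    show "dist M x \<le> dist M z"
    proof (cases "norm M \<le> r")
      case True
      then have "x = M" using r by (simp add: x_def max_def)
      then show ?thesis by simp
    next
      case False
      then have p: "norm M > 0" using r by linarith
      have eq: "M - x = (1 - r / norm M) *\<^sub>R M" using False by (simp add: x_def max_def algebra_simps)
      have ge: "1 - r / norm M \<ge> 0" using False p by (simp add: field_simps)
      have "dist M x = norm ((1 - r / norm M) *\<^sub>R M)" using eq by (simp add: dist_norm)
      also have "\<dots> = (1 - r / norm M) * norm M" using ge by simp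
      also have "\<dots> = norm M - r" using p by (simp add: field_simps)
      finally have "dist M x = norm M - r" .
      also have "\<dots> \<le> norm M - norm z" using z by simp
      also have "\<dots> \<le> dist M z" by (simp add: dist_norm norm_triangle_ineq2)
      finally show ?thesis .
    qed
  qed
  then have cx: "closest_point (cball 0 r) M = x"
    by (intro closest_point_unique[symmetric]) (use xin in auto)
  have "(1/r) *\<^sub>R x = (1 / max (norm M) r) *\<^sub>R M" using r by (simp add: x_def)
  then show ?thesis by (simp add: hz_def cx)
qed

lemma hz_lip:
  fixes M N :: "'a::euclidean_space"
  assumes r: "r > 0"
  shows "norm (hz r N - hz r M) \<le> norm (N - M) / r"
proof -
  have "dist (closest_point (cball 0 r) N) (closest_point (cball 0 r) M) \<le> dist N M"
    by (rule closest_point_lipschitz) (use r in auto)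
  then have d: "norm (closest_point (cball 0 r) N - closest_point (cball 0 r) M) \<le> norm (N - M)"
    by (simp add: dist_norm)
  have "hz r N - hz r M = (1/r) *\<^sub>R (closest_point (cball 0 r) N - closest_point (cball 0 r) M)"
    using r by (simp add: hz_closest scaleR_diff_right)
  then have "norm (hz r N - hz r M) = (1/r) * norm (closest_point (cball 0 r) N - closest_point (cball 0 r) M)"
    using r by simp
  also have "\<dots> \<le> (1/r) * norm (N - M)" using d r by (intro mult_left_mono) auto
  finally show ?thesis by simp
qed

lemma hub_upper:
  fixes M N :: "'a::euclidean_space"
  assumes r: "r > 0"
  shows "hub r N \<le> hub r M + hz r M \<bullet> (N - M) + (norm (N - M))^2 / r"
proof -
  have a: "hub r N - hub r M \<le> hz r N \<bullet> (N - M)"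
    using hub_lower[OF r, of N M] by (simp add: inner_diff_right)
  have "(hz r N - hz r M) \<bullet> (N - M) \<le> norm (hz r N - hz r M) * norm (N - M)"
    by (rule norm_cauchy_schwarz)
  also have "\<dots> \<le> norm (N - M) / r * norm (N - M)"
    by (rule mult_right_mono[OF hz_lip[OF r]]) simp
  finally have "(hz r N - hz r M) \<bullet> (N - M) \<le> (norm (N - M))^2 / r"
    by (simp add: power2_eq_square)
  then show ?thesis using a by (simp add: inner_diff_left)
qed

lemma hub_deriv:
  fixes M :: "'a::euclidean_space"
  assumes r: "r > 0"
  shows "(hub r has_derivative (\<lambda>H. hz r M \<bullet> H)) (at M)"
proof (rule quad_deriv[where K="1/r"])
  show "bounded_linear ((\<bullet>) (hz r M))" by (rule bounded_linear_inner_right)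
  fix y
  have "hub r y - hub r M - hz r M \<bullet> (y - M) \<le> (norm (y - M))^2 / r"
    using hub_upper[OF r, of y M] by simp
  moreover have "hub r y - hub r M - hz r M \<bullet> (y - M) \<ge> 0"
    using hub_lower[OF r, of M y] by simp
  ultimately show "norm (hub r y - hub r M - hz r M \<bullet> (y - M)) \<le> 1 / r * (norm (y - M))\<^sup>2"
    by simp
qed

definition hmap :: "real^'d^'d \<Rightarrow> real^'r^'d \<Rightarrow> real^'d^'d" where
  "hmap Sh X = (mat 1 - X ** transpose X) ** Sh"

definition Dh :: "real^'d^'d \<Rightarrow> real^'r^'d \<Rightarrow> real^'r^'d \<Rightarrow> real^'d^'d" where
  "Dh Sh X E = - ((E ** transpose X + X ** transpose E) ** Sh)"

lemma wsm_hub: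
  assumes \<rho>: "\<rho> > 0" and \<mu>: "\<mu> > 0"
  shows "wsm \<rho> Sh X \<mu> = 2 * \<rho> * hub (\<mu>/2) (hmap Sh X)"
proof -
  define n where "n = norm (hmap Sh X)"
  have w: "wfun \<rho> Sh X = 2 * \<rho> * n" by (simp add: wfun_def n_def hmap_def)
  have c: "(2 * \<rho> * n \<ge> \<mu> * \<rho>) = (n \<ge> \<mu>/2)" using \<rho> by (auto simp: field_simps)
  show ?thesis
  proof (cases "n \<ge> \<mu>/2")
    case True then show ?thesis using c by (simp add: wsm_def w hub_def n_def[symmetric])
  next
    case False
    then have "wsm \<rho> Sh X \<mu> = (2 * \<rho> * n)^2 / (2 * \<mu> * \<rho>) + \<mu> * \<rho> / 2"
      using c by (simp add: wsm_def w)
    also have "\<dots> = 2 * \<rho> * (n^2 / (2 * (\<mu>/2)) + (\<mu>/2)/2)"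
      using \<rho> \<mu> by (simp add: field_simps power2_eq_square)
    finally show ?thesis using False by (simp add: hub_def n_def[symmetric])
  qed
qed

lemma hmap_deriv: "(hmap Sh has_derivative Dh Sh X) (at X)"
proof -
  have t: "(transpose has_derivative transpose) (at X)"
    by (rule bounded_linear_imp_has_derivative[OF bl_transpose])
  have p: "((\<lambda>Y. Y ** transpose Y) has_derivative (\<lambda>E. X ** transpose E + E ** transpose X)) (at X)"
    using bounded_bilinear.FDERIV[OF bb_mm has_derivative_id t] by simp
  have q: "((\<lambda>Y. mat 1 - Y ** transpose Y) has_derivative (\<lambda>E. 0 - (X ** transpose E + E ** transpose X))) (at X)"
    by (rule has_derivative_diff[OF has_derivative_const p])
  have r: "((\<lambda>Y. (mat 1 - Y ** transpose Y) ** Sh) has_derivative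
      (\<lambda>E. (mat 1 - X ** transpose X) ** 0 + (0 - (X ** transpose E + E ** transpose X)) ** Sh)) (at X)"
    by (rule bounded_bilinear.FDERIV[OF bb_mm q has_derivative_const])
  have e: "(\<lambda>E. (mat 1 - X ** transpose X) ** 0 + (0 - (X ** transpose E + E ** transpose X)) ** Sh) = Dh Sh X"
    by (rule ext) (simp add: Dh_def add.commute mm_simps)
  show ?thesis using r unfolding e hmap_def[abs_def] by simp
qed

lemma wsm_deriv:
  assumes \<rho>: "\<rho> > 0" and \<mu>: "\<mu> > 0"
  shows "((\<lambda>Y. wsm \<rho> Sh Y \<mu>) has_derivative (\<lambda>E. 2 * \<rho> * (hz (\<mu>/2) (hmap Sh X) \<bullet> Dh Sh X E))) (at X)"
proof -
  have h: "((\<lambda>Y. hub (\<mu>/2) (hmap Sh Y)) has_derivative (\<lambda>E. hz (\<mu>/2) (hmap Sh X) \<bullet> Dh Sh X E)) (at X)"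
    using has_derivative_compose[OF hmap_deriv hub_deriv, of "\<mu>/2"] \<mu> by simp
  have d: "((\<lambda>Y. 2 * \<rho> * hub (\<mu>/2) (hmap Sh Y)) has_derivative (\<lambda>E. 2 * \<rho> * (hz (\<mu>/2) (hmap Sh X) \<bullet> Dh Sh X E))) (at X)"
    by (rule has_derivative_mult_right[OF h])
  have eq: "(\<lambda>Y. wsm \<rho> Sh Y \<mu>) = (\<lambda>Y. 2 * \<rho> * hub (\<mu>/2) (hmap Sh Y))"
    by (rule ext, rule wsm_hub[OF \<rho> \<mu>])
  show ?thesis unfolding eq by (rule d)
qed

lemma egrad_wsm:
  assumes \<rho>: "\<rho> > 0" and \<mu>: "\<mu> > 0"
  shows "((\<lambda>Y. wsm \<rho> Sh Y \<mu>) has_derivative (\<lambda>E. egrad (\<lambda>Y. wsm \<rho> Sh Y \<mu>) X \<bullet> E)) (at X)"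
    and "egrad (\<lambda>Y. wsm \<rho> Sh Y \<mu>) X \<bullet> E = 2 * \<rho> * (hz (\<mu>/2) (hmap Sh X) \<bullet> Dh Sh X E)"
  using egrad_deriv[OF wsm_deriv[OF \<rho> \<mu>, of Sh X]] by metis+

lemma norm_Dh: "norm (Dh Sh X E) \<le> 2 * norm X * norm E * norm Sh"
proof -
  have "norm (Dh Sh X E) \<le> norm (E ** transpose X + X ** transpose E) * norm Sh"
    unfolding Dh_def norm_minus_cancel by (rule norm_mm_le)
  also have "\<dots> \<le> (norm E * norm X + norm X * norm E) * norm Sh"
  proof (rule mult_right_mono)
    have "norm (E ** transpose X + X ** transpose E) \<le> norm (E ** transpose X) + norm (X ** transpose E)"
      by (rule norm_triangle_ineq)
    also have "\<dots> \<le> norm E * norm X + norm X * norm E"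
      using norm_mm_le[of E "transpose X"] norm_mm_le[of X "transpose E"] unfolding norm_transpose by (intro add_mono) auto
    finally show "norm (E ** transpose X + X ** transpose E) \<le> norm E * norm X + norm X * norm E" .
  qed simp
  finally show ?thesis by (simp add: algebra_simps)
qed

lemma egrad_wsm_bound:
  assumes \<rho>: "\<rho> > 0" and \<mu>: "\<mu> > 0"
  shows "norm (egrad (\<lambda>Y. wsm \<rho> Sh Y \<mu>) X) \<le> 4 * \<rho> * norm X * norm Sh"
proof -
  define g where "g = egrad (\<lambda>Y. wsm \<rho> Sh Y \<mu>) X"
  have "(norm g)^2 = g \<bullet> g" by (simp add: power2_norm_eq_inner)
  also have "\<dots> = 2 * \<rho> * (hz (\<mu>/2) (hmap Sh X) \<bullet> Dh Sh X g)" unfolding g_def by (rule egrad_wsm(2)[OF \<rho> \<mu>])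
  also have "\<dots> \<le> 2 * \<rho> * (norm (hz (\<mu>/2) (hmap Sh X)) * norm (Dh Sh X g))"
    using \<rho> by (intro mult_left_mono norm_cauchy_schwarz) auto
  also have "\<dots> \<le> 2 * \<rho> * (1 * (2 * norm X * norm g * norm Sh))"
    using \<rho> \<mu> by (intro mult_left_mono mult_mono hz_norm norm_Dh) auto
  finally have "norm g * norm g \<le> (4 * \<rho> * norm X * norm Sh) * norm g"
    by (simp add: power2_eq_square algebra_simps)
  then show ?thesis unfolding g_def[symmetric]
    using \<rho> by (cases "norm g = 0") (auto simp: mult_le_cancel_right)
qed

lemma hmap_diff: "hmap Sh (X + E) - hmap Sh X = Dh Sh X E - (E ** transpose E) ** Sh"
  by (simp add: hmap_def Dh_def mm_simps tr_simps algebra_simps)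

lemma hmap_diff2: "hmap Sh Y - hmap Sh X = - ((Y ** transpose (Y - X) + (Y - X) ** transpose X) ** Sh)"
  by (simp add: hmap_def mm_simps tr_simps algebra_simps)

lemma wsm_upper:
  assumes \<rho>: "\<rho> > 0" and \<mu>: "\<mu> > 0"
  shows "wsm \<rho> Sh Y \<mu> \<le> wsm \<rho> Sh X \<mu> + egrad (\<lambda>Y. wsm \<rho> Sh Y \<mu>) X \<bullet> (Y - X)
     + 2 * \<rho> * norm Sh * (norm (Y - X))^2
     + 4 * \<rho> / \<mu> * ((norm X + norm Y) * norm Sh)^2 * (norm (Y - X))^2"
proof -
  define E where "E = Y - X"
  have YE: "Y = X + E" by (simp add: E_def)
  define Z where "Z = hz (\<mu>/2) (hmap Sh X)"
  have r: "\<mu>/2 > 0" using \<mu> by simp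
  have hu: "hub (\<mu>/2) (hmap Sh Y) \<le> hub (\<mu>/2) (hmap Sh X) + Z \<bullet> (hmap Sh Y - hmap Sh X)
     + (norm (hmap Sh Y - hmap Sh X))^2 / (\<mu>/2)"
    unfolding Z_def by (rule hub_upper[OF r])
  have i1: "Z \<bullet> (hmap Sh Y - hmap Sh X) \<le> Z \<bullet> Dh Sh X E + norm Sh * (norm E)^2"
  proof -
    have "Z \<bullet> (hmap Sh Y - hmap Sh X) = Z \<bullet> Dh Sh X E - Z \<bullet> ((E ** transpose E) ** Sh)"
      unfolding YE hmap_diff by (simp add: inner_diff_right)
    moreover have "- (Z \<bullet> ((E ** transpose E) ** Sh)) \<le> norm Sh * (norm E)^2"
    proof -
      have "- (Z \<bullet> ((E ** transpose E) ** Sh)) \<le> norm Z * norm ((E ** transpose E) ** Sh)"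
        using Cauchy_Schwarz_ineq2[of Z "(E ** transpose E) ** Sh"] by linarith
      also have "\<dots> \<le> 1 * (norm E * norm E * norm Sh)"
      proof (rule mult_mono)
        show "norm Z \<le> 1" unfolding Z_def by (rule hz_norm[OF r])
        have "norm ((E ** transpose E) ** Sh) \<le> norm (E ** transpose E) * norm Sh" by (rule norm_mm_le)
        also have "\<dots> \<le> (norm E * norm E) * norm Sh"
          by (rule mult_right_mono) (use norm_mm_le[of E "transpose E"] in \<open>auto simp: norm_transpose\<close>)
        finally show "norm ((E ** transpose E) ** Sh) \<le> norm E * norm E * norm Sh" .
      qed auto
      finally show ?thesis by (simp add: power2_eq_square algebra_simps)
    qed
    ultimately show ?thesis by linarith
  qed
  have i2: "norm (hmap Sh Y - hmap Sh X) \<le> (norm X + norm Y) * norm Sh * norm E"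
  proof -
    have "norm (hmap Sh Y - hmap Sh X) \<le> norm (Y ** transpose E + E ** transpose X) * norm Sh"
      unfolding hmap_diff2 norm_minus_cancel E_def by (rule norm_mm_le)
    also have "\<dots> \<le> (norm Y * norm E + norm E * norm X) * norm Sh"
    proof (rule mult_right_mono)
      have "norm (Y ** transpose E + E ** transpose X) \<le> norm (Y ** transpose E) + norm (E ** transpose X)"
        by (rule norm_triangle_ineq)
      also have "\<dots> \<le> norm Y * norm E + norm E * norm X"
        using norm_mm_le[of Y "transpose E"] norm_mm_le[of E "transpose X"] unfolding norm_transpose by (intro add_mono) auto
      finally show "norm (Y ** transpose E + E ** transpose X) \<le> norm Y * norm E + norm E * norm X" .
    qed simp
    finally show ?thesis by (simp add: algebra_simps)
  qed
  have i3: "(norm (hmap Sh Y - hmap Sh X))^2 \<le> ((norm X + norm Y) * norm Sh)^2 * (norm E)^2"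
    using power_mono[OF i2, of 2] by (simp add: power_mult_distrib)
  have "wsm \<rho> Sh Y \<mu> = 2 * \<rho> * hub (\<mu>/2) (hmap Sh Y)" by (rule wsm_hub[OF \<rho> \<mu>])
  also have "\<dots> \<le> 2 * \<rho> * (hub (\<mu>/2) (hmap Sh X) + (Z \<bullet> Dh Sh X E + norm Sh * (norm E)^2)
     + ((norm X + norm Y) * norm Sh)^2 * (norm E)^2 / (\<mu>/2))"
  proof (rule mult_left_mono)
    have "(norm (hmap Sh Y - hmap Sh X))^2 / (\<mu>/2) \<le> ((norm X + norm Y) * norm Sh)^2 * (norm E)^2 / (\<mu>/2)"
      using i3 r by (simp add: divide_right_mono)
    then show "hub (\<mu>/2) (hmap Sh Y) \<le> hub (\<mu>/2) (hmap Sh X) + (Z \<bullet> Dh Sh X E + norm Sh * (norm E)^2)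
     + ((norm X + norm Y) * norm Sh)^2 * (norm E)^2 / (\<mu>/2)" using hu i1 by linarith
  qed (use \<rho> in simp)
  also have "\<dots> = wsm \<rho> Sh X \<mu> + egrad (\<lambda>Y. wsm \<rho> Sh Y \<mu>) X \<bullet> E
     + 2 * \<rho> * norm Sh * (norm E)^2
     + 4 * \<rho> / \<mu> * ((norm X + norm Y) * norm Sh)^2 * (norm E)^2"
  proof -
    have eg: "egrad (\<lambda>Y. wsm \<rho> Sh Y \<mu>) X \<bullet> E = 2 * \<rho> * (Z \<bullet> Dh Sh X E)"
      unfolding Z_def by (rule egrad_wsm(2)[OF \<rho> \<mu>])
    have wx: "wsm \<rho> Sh X \<mu> = 2 * \<rho> * hub (\<mu>/2) (hmap Sh X)" by (rule wsm_hub[OF \<rho> \<mu>])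
    show ?thesis unfolding eg wx using \<mu> by (simp add: field_simps)
  qed
  finally show ?thesis by (simp add: E_def)
qed

lemma u_descent:
  fixes u :: "'a::euclidean_space \<Rightarrow> real"
  assumes ud: "\<forall>X. u differentiable (at X)" and ul: "L-lipschitz_on UNIV (egrad u)"
  shows "\<bar>u Y - u X - egrad u X \<bullet> (Y - X)\<bar> \<le> L * (norm (Y - X))^2"
proof -
  define E where "E = Y - X"
  define \<phi> where "\<phi> t = u (X + t *\<^sub>R E) - t * (egrad u X \<bullet> E)" for t
  have L0: "L \<ge> 0" using ul lipschitz_on_nonneg by blast
  have d: "(\<phi> has_derivative (\<lambda>h. h * ((egrad u (X + t *\<^sub>R E) - egrad u X) \<bullet> E))) (at t within {0..1})" for t
  proof -
    have l: "((\<lambda>t. X + t *\<^sub>R E) has_derivative (\<lambda>h. h *\<^sub>R E)) (at t within {0..1})"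
      by (auto intro!: derivative_eq_intros)
    have g: "(u has_derivative (\<lambda>H. egrad u (X + t *\<^sub>R E) \<bullet> H)) (at (X + t *\<^sub>R E))"
      using egrad_differentiable ud by blast
    have "((\<lambda>t. u (X + t *\<^sub>R E)) has_derivative (\<lambda>h. egrad u (X + t *\<^sub>R E) \<bullet> (h *\<^sub>R E))) (at t within {0..1})"
      by (rule has_derivative_compose[OF l g])
    then have "(\<phi> has_derivative (\<lambda>h. egrad u (X + t *\<^sub>R E) \<bullet> (h *\<^sub>R E) - h * (egrad u X \<bullet> E))) (at t within {0..1})"
      unfolding \<phi>_def[abs_def] by (auto intro!: derivative_eq_intros)
    then show ?thesis by (simp add: inner_diff_left algebra_simps)
  qed
  obtain \<xi> where \<xi>: "\<xi> \<in> {0..1}" "\<phi> 1 - \<phi> 0 = 1 * ((egrad u (X + \<xi> *\<^sub>R E) - egrad u X) \<bullet> E)"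
    using mvt_very_simple[of 0 1 \<phi>, OF _ d] by auto
  have "\<bar>(egrad u (X + \<xi> *\<^sub>R E) - egrad u X) \<bullet> E\<bar> \<le> norm (egrad u (X + \<xi> *\<^sub>R E) - egrad u X) * norm E"
    by (rule Cauchy_Schwarz_ineq2)
  also have "\<dots> \<le> (L * norm (\<xi> *\<^sub>R E)) * norm E"
  proof (rule mult_right_mono)
    have "dist (egrad u (X + \<xi> *\<^sub>R E)) (egrad u X) \<le> L * dist (X + \<xi> *\<^sub>R E) X"
      by (rule lipschitz_onD[OF ul]) auto
    then show "norm (egrad u (X + \<xi> *\<^sub>R E) - egrad u X) \<le> L * norm (\<xi> *\<^sub>R E)" by (simp add: dist_norm)
  qed simp
  also have "\<dots> \<le> L * norm E * norm E"
    using \<xi>(1) L0 by (simp add: mult_left_le_one_le mult_right_mono mult_left_mono)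
  finally show ?thesis using \<xi>(2) by (simp add: \<phi>_def E_def power2_eq_square algebra_simps)
qed

lemma egrad_u_bound:
  assumes ul: "L-lipschitz_on UNIV (egrad u)"
  shows "norm (egrad u X) \<le> norm (egrad u 0) + L * norm X"
proof -
  have "dist (egrad u X) (egrad u 0) \<le> L * dist X 0" by (rule lipschitz_onD[OF ul]) auto
  then show ?thesis by (simp add: dist_norm) (metis norm_triangle_ineq2 add.commute diff_le_eq order_trans)
qed

lemma tangent_scale: "D \<in> tangent X \<Longrightarrow> t *\<^sub>R D \<in> tangent X"
proof -
  assume "D \<in> tangent X"
  then have "transpose X ** D + transpose D ** X = 0" by (simp add: tangent_def)
  then have "t *\<^sub>R (transpose X ** D + transpose D ** X) = 0" by simp
  then show ?thesis by (simp add: tangent_def mm_simps tr_simps scaleR_add_right)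
qed

lemma cont_mm:
  assumes "continuous_on S f" "continuous_on S g"
  shows "continuous_on S (\<lambda>x. (f x :: real^'n^'m) ** (g x :: real^'p^'n))"
  by (rule bounded_bilinear.continuous_on[OF bb_mm assms])

lemma cont_tr:
  assumes "continuous_on S f"
  shows "continuous_on S (\<lambda>x. transpose (f x :: real^'n^'m))"
  by (rule bounded_linear.continuous_on[OF bl_transpose assms])

lemma compact_K:
  assumes B: "B \<ge> 0"
  shows "compact {p :: (real^'r^'d) \<times> (real^'r^'d). fst p \<in> stiefel \<and> snd p \<in> tangent (fst p) \<and> norm (snd p) \<le> B}"
    (is "compact ?K")
proof -
  have eq: "?K = {p. transpose (fst p) ** fst p = mat 1} \<inter>
     {p. transpose (fst p) ** snd p + transpose (snd p) ** fst p = 0} \<inter> {p. norm (snd p) \<le> B}"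
    by (auto simp: stiefel_def tangent_def)
  have c1: "closed {p :: (real^'r^'d) \<times> (real^'r^'d). transpose (fst p) ** fst p = mat 1}"
    by (rule closed_Collect_eq) (intro cont_mm cont_tr continuous_intros)+
  have c2: "closed {p :: (real^'r^'d) \<times> (real^'r^'d). transpose (fst p) ** snd p + transpose (snd p) ** fst p = 0}"
    by (rule closed_Collect_eq) (intro cont_mm cont_tr continuous_intros)+
  have c3: "closed {p :: (real^'r^'d) \<times> (real^'r^'d). norm (snd p) \<le> B}"
    by (rule closed_Collect_le) (intro continuous_intros)+
  have cl: "closed ?K" unfolding eq using c1 c2 c3 by (intro closed_Int)
  have bd: "bounded ?K"
    unfolding bounded_iff
  proof (intro exI ballI)
    fix p assume p: "p \<in> ?K"
    have "norm p \<le> norm (fst p) + norm (snd p)" using norm_Pair_le[of "fst p" "snd p"] by simp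
    also have "\<dots> \<le> sqrt (real CARD('r)) + B" using p norm_stiefel_le[of "fst p"] by auto
    finally show "norm p \<le> sqrt (real CARD('r)) + B" .
  qed
  show ?thesis using cl bd by (simp add: compact_eq_bounded_closed)
qed

lemma retraction_second_order:
  fixes Ret :: "real^'r^'d \<Rightarrow> real^'r^'d \<Rightarrow> real^'r^'d"
  assumes ret: "retraction Ret" and B: "B \<ge> 0"
  shows "\<exists>M\<ge>0. \<forall>X\<in>stiefel. \<forall>D\<in>tangent X. norm D \<le> B \<longrightarrow> norm (Ret X D - X - D) \<le> M * (norm D)^2"
proof -
  define F where "F p = Ret (fst p) (snd p)" for p
  obtain U where U: "open U" "{(X, D). X \<in> stiefel \<and> D \<in> tangent X} \<subseteq> U" "smooth_on F U"
    using ret unfolding retraction_def F_def by auto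
  obtain Dn :: "nat \<Rightarrow> (real^'r^'d) \<times> (real^'r^'d) \<Rightarrow> ((real^'r^'d) \<times> (real^'r^'d)) list \<Rightarrow> real^'r^'d"
    where D0': "\<forall>x\<in>U. Dn 0 x [] = F x"
      and Dall: "\<forall>n hs. length hs = n \<longrightarrow> continuous_on U (\<lambda>y. Dn n y hs) \<and>
         (\<forall>x\<in>U. ((\<lambda>y. Dn n y hs) has_derivative (\<lambda>h. Dn (Suc n) x (h # hs))) (at x))"
    using U(3) unfolding smooth_on_def by blast
  have D0: "\<And>x. x \<in> U \<Longrightarrow> Dn 0 x [] = F x" using D0' by blast
  have Dc: "\<And>n hs. length hs = n \<Longrightarrow> continuous_on U (\<lambda>y. Dn n y hs)" using Dall by blast
  have Dd: "\<And>n hs x. length hs = n \<Longrightarrow> x \<in> U \<Longrightarrow> ((\<lambda>y. Dn n y hs) has_derivative (\<lambda>h. Dn (Suc n) x (h # hs))) (at x)"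
    using Dall by blast
  have inU: "(X, D) \<in> U" if "X \<in> stiefel" "D \<in> tangent X" for X D using U(2) that by auto
  have lin1: "linear (\<lambda>h. Dn (Suc n) x (h # hs))" if "length hs = n" "x \<in> U" for n hs x
    using Dd[OF that] has_derivative_linear by blast
  have lin2: "linear (\<lambda>k. Dn 2 p [h, k])" if p: "p \<in> U" for p h
  proof (rule linearI)
    fix k1 k2
    have a: "((\<lambda>y. Dn 1 y [k1 + k2]) has_derivative (\<lambda>h. Dn 2 p [h, k1 + k2])) (at p)"
      using Dd[of "[k1 + k2]" 1 p] p by (simp add: numeral_2_eq_2)
    have b: "((\<lambda>y. Dn 1 y [k1] + Dn 1 y [k2]) has_derivative (\<lambda>h. Dn 2 p [h, k1] + Dn 2 p [h, k2])) (at p)"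
      using has_derivative_add[OF Dd[of "[k1]" 1 p] Dd[of "[k2]" 1 p]] p by (simp add: numeral_2_eq_2)
    have "((\<lambda>y. Dn 1 y [k1 + k2]) has_derivative (\<lambda>h. Dn 2 p [h, k1] + Dn 2 p [h, k2])) (at p)"
    proof (rule has_derivative_transform_within_open[OF b U(1) p])
      fix y assume "y \<in> U"
      then show "Dn 1 y [k1] + Dn 1 y [k2] = Dn 1 y [k1 + k2]"
        using linear_add[OF lin1[of "[]" 0 y]] by simp
    qed
    from has_derivative_unique[OF a this] show "Dn 2 p [h, k1 + k2] = Dn 2 p [h, k1] + Dn 2 p [h, k2]"
      by metis
  next
    fix c k
    have a: "((\<lambda>y. Dn 1 y [c *\<^sub>R k]) has_derivative (\<lambda>h. Dn 2 p [h, c *\<^sub>R k])) (at p)"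
      using Dd[of "[c *\<^sub>R k]" 1 p] p by (simp add: numeral_2_eq_2)
    have b: "((\<lambda>y. c *\<^sub>R Dn 1 y [k]) has_derivative (\<lambda>h. c *\<^sub>R Dn 2 p [h, k])) (at p)"
      using has_derivative_scaleR_right[OF Dd[of "[k]" 1 p]] p by (simp add: numeral_2_eq_2)
    have "((\<lambda>y. Dn 1 y [c *\<^sub>R k]) has_derivative (\<lambda>h. c *\<^sub>R Dn 2 p [h, k])) (at p)"
    proof (rule has_derivative_transform_within_open[OF b U(1) p])
      fix y assume "y \<in> U"
      then show "c *\<^sub>R Dn 1 y [k] = Dn 1 y [c *\<^sub>R k]"
        using linear_scale[OF lin1[of "[]" 0 y]] by simp
    qed
    from has_derivative_unique[OF a this] show "Dn 2 p [h, c *\<^sub>R k] = c *\<^sub>R Dn 2 p [h, k]"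
      by metis
  qed
  have lin2h: "linear (\<lambda>h. Dn 2 p [h, k])" if p: "p \<in> U" for p k
    using lin1[of "[k]" 1 p] p by (simp add: numeral_2_eq_2)
  define K where "K = {p :: (real^'r^'d) \<times> (real^'r^'d). fst p \<in> stiefel \<and> snd p \<in> tangent (fst p) \<and> norm (snd p) \<le> B}"
  have Kc: "compact K" unfolding K_def by (rule compact_K[OF B])
  have KU: "K \<subseteq> U" unfolding K_def using inU by force
  define Q where "Q p = (\<Sum>b\<in>Basis. \<Sum>b'\<in>Basis. norm (Dn 2 p [(0, b), (0, b')]))" for p
  have Qc: "continuous_on K Q"
  proof -
    have "continuous_on K (\<lambda>p. Dn 2 p [(0, b), (0, b')])" for b b'
      by (rule continuous_on_subset[OF Dc KU]) simp
    then show ?thesis unfolding Q_def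
      by (intro continuous_on_sum continuous_on_norm) auto
  qed
  obtain C where C: "\<forall>y\<in>Q ` K. norm y \<le> C"
    using compact_imp_bounded[OF compact_continuous_image[OF Qc Kc]] unfolding bounded_iff by blast
  define M where "M = max C 0"
  have M0: "M \<ge> 0" by (simp add: M_def)
  have QM: "Q p \<le> M" if "p \<in> K" for p
  proof -
    have "norm (Q p) \<le> C" using C that by blast
    then show ?thesis unfolding M_def by simp
  qed
  have Q0: "Q p \<ge> 0" for p unfolding Q_def by (intro sum_nonneg) auto
  have linP: "linear (\<lambda>x::real^'r^'d. (0::real^'r^'d, x))"
    by (rule linearI) simp_all
  have PD: "(0::real^'r^'d, D) = (\<Sum>b\<in>Basis. (D \<bullet> b) *\<^sub>R (0, b))" for D :: "real^'r^'d"
    by (simp add: prod_eq_iff fst_sum snd_sum euclidean_representation)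
  have bil: "norm (Dn 2 p [(0, D), (0, D)]) \<le> Q p * (norm D)^2" if p: "p \<in> U" for p D
  proof -
    have e2: "Dn 2 p [h, (0, D)] = (\<Sum>b'\<in>Basis. (D \<bullet> b') *\<^sub>R Dn 2 p [h, (0, b')])" for h
    proof -
      have "Dn 2 p [h, (0, D)] = Dn 2 p [h, \<Sum>b\<in>Basis. (D \<bullet> b) *\<^sub>R (0, b)]"
        by (rule arg_cong[where f="\<lambda>k. Dn 2 p [h, k]"], rule PD)
      also have "\<dots> = (\<Sum>b'\<in>Basis. (D \<bullet> b') *\<^sub>R Dn 2 p [h, (0, b')])"
        unfolding linear_sum[OF lin2[OF p]] o_def linear_scale[OF lin2[OF p]] ..
      finally show ?thesis .
    qed
    have e1: "Dn 2 p [(0, D), k] = (\<Sum>b\<in>Basis. (D \<bullet> b) *\<^sub>R Dn 2 p [(0, b), k])" for k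
    proof -
      have "Dn 2 p [(0, D), k] = Dn 2 p [\<Sum>b\<in>Basis. (D \<bullet> b) *\<^sub>R (0, b), k]"
        by (rule arg_cong[where f="\<lambda>h. Dn 2 p [h, k]"], rule PD)
      also have "\<dots> = (\<Sum>b\<in>Basis. (D \<bullet> b) *\<^sub>R Dn 2 p [(0, b), k])"
        unfolding linear_sum[OF lin2h[OF p]] o_def linear_scale[OF lin2h[OF p]] ..
      finally show ?thesis .
    qed
    have "norm (Dn 2 p [(0, D), (0, D)]) = norm (\<Sum>b\<in>Basis. (D \<bullet> b) *\<^sub>R (\<Sum>b'\<in>Basis. (D \<bullet> b') *\<^sub>R Dn 2 p [(0, b), (0, b')]))"
      by (subst e1) (simp only: e2)
    also have "\<dots> \<le> (\<Sum>b\<in>Basis. norm ((D \<bullet> b) *\<^sub>R (\<Sum>b'\<in>Basis. (D \<bullet> b') *\<^sub>R Dn 2 p [(0, b), (0, b')])))"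
      by (rule norm_sum)
    also have "\<dots> \<le> (\<Sum>b\<in>Basis. norm D * (\<Sum>b'\<in>Basis. norm D * norm (Dn 2 p [(0, b), (0, b')])))"
    proof (rule sum_mono)
      fix b :: "real^'r^'d" assume b: "b \<in> Basis"
      have "norm ((D \<bullet> b) *\<^sub>R (\<Sum>b'\<in>Basis. (D \<bullet> b') *\<^sub>R Dn 2 p [(0, b), (0, b')]))
          = \<bar>D \<bullet> b\<bar> * norm (\<Sum>b'\<in>Basis. (D \<bullet> b') *\<^sub>R Dn 2 p [(0, b), (0, b')])" by simp
      also have "\<dots> \<le> norm D * (\<Sum>b'\<in>Basis. norm D * norm (Dn 2 p [(0, b), (0, b')]))"
      proof (rule mult_mono)
        show "\<bar>D \<bullet> b\<bar> \<le> norm D" by (rule Basis_le_norm[OF b])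
        have "norm (\<Sum>b'\<in>Basis. (D \<bullet> b') *\<^sub>R Dn 2 p [(0, b), (0, b')])
            \<le> (\<Sum>b'\<in>Basis. norm ((D \<bullet> b') *\<^sub>R Dn 2 p [(0, b), (0, b')]))" by (rule norm_sum)
        also have "\<dots> \<le> (\<Sum>b'\<in>Basis. norm D * norm (Dn 2 p [(0, b), (0, b')]))"
          by (intro sum_mono) (simp add: Basis_le_norm mult_right_mono)
        finally show "norm (\<Sum>b'\<in>Basis. (D \<bullet> b') *\<^sub>R Dn 2 p [(0, b), (0, b')])
            \<le> (\<Sum>b'\<in>Basis. norm D * norm (Dn 2 p [(0, b), (0, b')]))" .
      qed (auto intro: sum_nonneg)
      finally show "norm ((D \<bullet> b) *\<^sub>R (\<Sum>b'\<in>Basis. (D \<bullet> b') *\<^sub>R Dn 2 p [(0, b), (0, b')])) \<le>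
         norm D * (\<Sum>b'\<in>Basis. norm D * norm (Dn 2 p [(0, b), (0, b')]))" .
    qed
    also have "\<dots> = Q p * (norm D)^2"
      by (simp add: Q_def sum_distrib_left[symmetric] power2_eq_square algebra_simps)
    finally show ?thesis .
  qed
  show ?thesis
  proof (intro exI[of _ M] conjI M0 ballI impI)
    fix X D :: "real^'r^'d" assume X: "X \<in> stiefel" and D: "D \<in> tangent X" and DB: "norm D \<le> B"
    define pth where "pth t = (X, t *\<^sub>R D)" for t :: real
    have pU: "pth t \<in> U" for t unfolding pth_def by (rule inU[OF X tangent_scale[OF D]])
    have pK: "pth t \<in> K" if "0 \<le> t" "t \<le> 1" for t
    proof -
      have "norm (t *\<^sub>R D) \<le> B" using that DB
        by simp (metis abs_of_nonneg mult_left_le_one_le norm_ge_zero order_trans)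
      then show ?thesis unfolding K_def pth_def using X tangent_scale[OF D] by simp
    qed
    have dp: "(pth has_derivative (\<lambda>s. (0, s *\<^sub>R D))) (at t)" for t
      unfolding pth_def[abs_def] by (auto intro!: derivative_eq_intros)
    define \<psi> where "\<psi> t = Dn 1 (pth t) [(0, D)]" for t
    have d\<psi>: "(\<psi> has_derivative (\<lambda>s. s *\<^sub>R Dn 2 (pth t) [(0, D), (0, D)])) (at t)" for t
    proof -
      have "(\<psi> has_derivative (\<lambda>s. Dn 2 (pth t) [(0, s *\<^sub>R D), (0, D)])) (at t)"
        unfolding \<psi>_def[abs_def]
        using has_derivative_compose[OF dp Dd[of "[(0, D)]" 1 "pth t", OF _ pU]] by (simp add: numeral_2_eq_2)
      moreover have "Dn 2 (pth t) [(0, s *\<^sub>R D), (0, D)] = s *\<^sub>R Dn 2 (pth t) [(0, D), (0, D)]" for s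
        using linear_scale[OF lin2h[OF pU[of t]], of s "(0, D)"] by simp
      ultimately show ?thesis by simp
    qed
    have \<psi>0: "\<psi> 0 = D"
    proof -
      have a: "((\<lambda>t. Dn 0 (pth t) []) has_derivative (\<lambda>s. Dn 1 (pth 0) [(0, s *\<^sub>R D)])) (at 0)"
        using has_derivative_compose[OF dp Dd[of "[]" 0 "pth 0", OF _ pU]] by simp
      have "((\<lambda>t. Ret X (t *\<^sub>R D)) has_derivative (\<lambda>s. Dn 1 (pth 0) [(0, s *\<^sub>R D)])) (at 0)"
      proof (rule has_derivative_transform_within_open[OF a open_UNIV UNIV_I])
        fix t :: real show "Dn 0 (pth t) [] = Ret X (t *\<^sub>R D)"
          using D0[OF pU[of t]] by (simp add: F_def pth_def)
      qed
      moreover have "((\<lambda>t. Ret X (t *\<^sub>R D)) has_derivative (\<lambda>s. s *\<^sub>R D)) (at 0)"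
        using ret X D unfolding retraction_def has_vector_derivative_def by blast
      ultimately have "(\<lambda>s. Dn 1 (pth 0) [(0, s *\<^sub>R D)]) = (\<lambda>s. s *\<^sub>R D)"
        by (rule has_derivative_unique)
      then have "Dn 1 (pth 0) [(0, 1 *\<^sub>R D)] = 1 *\<^sub>R D" by metis
      then show ?thesis by (simp add: \<psi>_def)
    qed
    have \<psi>b: "norm (\<psi> \<xi> - D) \<le> M * (norm D)^2" if \<xi>: "0 \<le> \<xi>" "\<xi> \<le> 1" for \<xi>
    proof (cases "\<xi> = 0")
      case True then show ?thesis using \<psi>0 M0 by simp
    next
      case False
      then have \<xi>0: "0 < \<xi>" using \<xi> by simp
      have c: "continuous_on {0..\<xi>} \<psi>"
        by (rule has_derivative_continuous_on, rule has_derivative_at_withinI, rule d\<psi>)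
      obtain \<eta> where \<eta>: "\<eta> \<in> {0<..<\<xi>}" "norm (\<psi> \<xi> - \<psi> 0) \<le> norm ((\<xi> - 0) *\<^sub>R Dn 2 (pth \<eta>) [(0, D), (0, D)])"
        using mvt_general[OF \<xi>0 c d\<psi>] by blast
      have "norm ((\<xi> - 0) *\<^sub>R Dn 2 (pth \<eta>) [(0, D), (0, D)]) = \<xi> * norm (Dn 2 (pth \<eta>) [(0, D), (0, D)])"
        using \<xi>0 by simp
      also have "\<dots> \<le> 1 * (Q (pth \<eta>) * (norm D)^2)"
        by (rule mult_mono) (use \<xi> bil[OF pU] in auto)
      also have "\<dots> \<le> M * (norm D)^2"
        using QM[OF pK] \<eta>(1) \<xi> by (auto intro!: mult_right_mono)
      finally show ?thesis using \<eta>(2) \<psi>0 by simp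
    qed
    define \<phi> where "\<phi> t = Ret X (t *\<^sub>R D) - t *\<^sub>R D" for t :: real
    have d\<phi>: "(\<phi> has_derivative (\<lambda>s. s *\<^sub>R (\<psi> t - D))) (at t)" for t
    proof -
      have a: "((\<lambda>t. Dn 0 (pth t) []) has_derivative (\<lambda>s. Dn 1 (pth t) [(0, s *\<^sub>R D)])) (at t)"
        using has_derivative_compose[OF dp Dd[of "[]" 0 "pth t", OF _ pU]] by simp
      have b: "((\<lambda>t. Ret X (t *\<^sub>R D)) has_derivative (\<lambda>s. Dn 1 (pth t) [(0, s *\<^sub>R D)])) (at t)"
      proof (rule has_derivative_transform_within_open[OF a open_UNIV UNIV_I])
        fix t :: real show "Dn 0 (pth t) [] = Ret X (t *\<^sub>R D)"
          using D0[OF pU[of t]] by (simp add: F_def pth_def)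
      qed
      have e: "Dn 1 (pth t) [(0, s *\<^sub>R D)] = s *\<^sub>R \<psi> t" for s
        using linear_scale[OF lin1[of "[]" 0 "pth t", OF _ pU], of s "(0, D)"] by (simp add: \<psi>_def)
      have "(\<phi> has_derivative (\<lambda>s. Dn 1 (pth t) [(0, s *\<^sub>R D)] - s *\<^sub>R D)) (at t)"
        unfolding \<phi>_def[abs_def] by (rule has_derivative_diff[OF b]) (auto intro!: derivative_eq_intros)
      then show ?thesis by (simp add: e[unfolded One_nat_def] scaleR_diff_right)
    qed
    have c: "continuous_on {0..1} \<phi>"
      by (rule has_derivative_continuous_on, rule has_derivative_at_withinI, rule d\<phi>)
    obtain \<xi> where \<xi>: "\<xi> \<in> {0<..<1}" "norm (\<phi> 1 - \<phi> 0) \<le> norm ((1 - 0) *\<^sub>R (\<psi> \<xi> - D))"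
      using mvt_general[OF zero_less_one c d\<phi>] by blast
    have "\<phi> 1 - \<phi> 0 = Ret X D - X - D"
      using ret X unfolding retraction_def by (simp add: \<phi>_def)
    then show "norm (Ret X D - X - D) \<le> M * (norm D)^2"
      using \<xi> \<psi>b[of \<xi>] by simp
  qed
qed

lemma subgrad_sep:
  fixes \<sigma> :: "'a::euclidean_space \<Rightarrow> real"
  assumes cv: "convex_on UNIV \<sigma>" and s0: "\<sigma> 0 = 0"
    and T0: "0 \<in> T" and Tadd: "\<And>x y. x \<in> T \<Longrightarrow> y \<in> T \<Longrightarrow> x + y \<in> T"
    and Tsc: "\<And>c x. x \<in> T \<Longrightarrow> c *\<^sub>R x \<in> T"
    and nn: "\<And>W. W \<in> T \<Longrightarrow> \<sigma> W \<ge> 0"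
  shows "\<exists>g. (\<forall>W. g \<bullet> W \<le> \<sigma> W) \<and> (\<forall>W\<in>T. g \<bullet> W = 0)"
proof -
  define A where "A = {z :: 'a \<times> real. snd z > \<sigma> (fst z)}"
  define L where "L = (\<lambda>W. (W, 0::real)) ` T"
  have cA: "convex A" unfolding A_def
  proof (rule convexI)
    fix x y :: "'a \<times> real" and u v :: real
    assume x: "x \<in> {z. \<sigma> (fst z) < snd z}" and y: "y \<in> {z. \<sigma> (fst z) < snd z}"
      and u: "0 \<le> u" and v: "0 \<le> v" and uv: "u + v = 1"
    have "\<sigma> (u *\<^sub>R fst x + v *\<^sub>R fst y) \<le> u * \<sigma> (fst x) + v * \<sigma> (fst y)"
    proof -
      have uu: "u = 1 - v" using uv by simp
      show ?thesis using convex_onD[OF cv, of v "fst x" "fst y"] u v uv unfolding uu by simp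
    qed
    also have "\<dots> < u * snd x + v * snd y"
    proof (cases "u = 0")
      case True then show ?thesis using uv y by simp
    next
      case False then have "u > 0" using u by simp
      then have "u * \<sigma> (fst x) < u * snd x" using x by simp
      moreover have "v * \<sigma> (fst y) \<le> v * snd y" using y v by (intro mult_left_mono) auto
      ultimately show ?thesis by linarith
    qed
    finally show "u *\<^sub>R x + v *\<^sub>R y \<in> {z. \<sigma> (fst z) < snd z}" by simp
  qed
  have cL: "convex L" unfolding L_def
  proof (rule convexI)
    fix x y :: "'a \<times> real" and u v :: real
    assume "x \<in> (\<lambda>W. (W, 0::real)) ` T" "y \<in> (\<lambda>W. (W, 0::real)) ` T"
    then obtain a b where ab: "a \<in> T" "b \<in> T" "x = (a, 0)" "y = (b, 0)" by auto
    then have "u *\<^sub>R a + v *\<^sub>R b \<in> T" using Tadd Tsc by blast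
    then show "u *\<^sub>R x + v *\<^sub>R y \<in> (\<lambda>W. (W, 0::real)) ` T" using ab by (auto intro!: image_eqI)
  qed
  have "(0, 1) \<in> A" unfolding A_def using s0 by simp
  then have Ane: "A \<noteq> {}" by blast
  have Lne: "L \<noteq> {}" unfolding L_def using T0 by auto
  have dis: "L \<inter> A = {}" unfolding L_def A_def using nn by force
  obtain a b where a0: "a \<noteq> 0" and aL: "\<forall>x\<in>L. a \<bullet> x \<le> b" and aA: "\<forall>x\<in>A. a \<bullet> x \<ge> b"
    using separating_hyperplane_sets[OF cL cA Lne Ane dis] by blast
  define p where "p = fst a"
  define q where "q = snd a"
  have ia: "a \<bullet> (W, t) = p \<bullet> W + q * t" for W t by (cases a) (simp add: p_def q_def inner_Pair)
  have pT: "p \<bullet> W \<le> b" if "W \<in> T" for W using aL that ia unfolding L_def by force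
  have b0: "b \<ge> 0" using pT[OF T0] by simp
  have pT0: "p \<bullet> W = 0" if W: "W \<in> T" for W
  proof (rule ccontr)
    assume ne: "p \<bullet> W \<noteq> 0"
    define c where "c = (b + 1) / (p \<bullet> W)"
    have "p \<bullet> (c *\<^sub>R W) \<le> b" by (rule pT[OF Tsc[OF W]])
    moreover have "p \<bullet> (c *\<^sub>R W) = b + 1" using ne by (simp add: c_def)
    ultimately show False by simp
  qed
  have At: "p \<bullet> W + q * t \<ge> b" if "t > \<sigma> W" for W t
    using aA that ia unfolding A_def by force
  have q0: "q \<ge> 0"
  proof (rule ccontr)
    assume "\<not> q \<ge> 0"
    then have qn: "q < 0" by simp
    have "p \<bullet> 0 + q * ((b + 1) / (- q)) \<ge> b"
      by (rule At) (use s0 b0 qn in \<open>simp add: divide_neg_pos divide_pos_neg\<close>)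
    then show False using qn b0 by simp
  qed
  have qp: "q > 0"
  proof (rule ccontr)
    assume "\<not> q > 0"
    then have qz: "q = 0" using q0 by simp
    have "p \<bullet> (- p) + q * (\<sigma> (- p) + 1) \<ge> b" by (rule At) simp
    then have "p \<bullet> p \<le> 0" using qz b0 by simp
    then have "p = 0" using inner_ge_zero[of p] by (simp add: order_antisym)
    then have "a = 0" using qz by (simp add: p_def q_def prod_eq_iff)
    then show False using a0 by simp
  qed
  have bz: "b \<le> 0"
  proof (rule ccontr)
    assume "\<not> b \<le> 0"
    then have bp: "b > 0" by simp
    have "p \<bullet> 0 + q * (b / (2 * q)) \<ge> b" by (rule At) (use s0 bp qp in simp)
    then show False using bp qp by simp
  qed
  have key: "p \<bullet> W + q * \<sigma> W \<ge> 0" for W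
  proof (rule ccontr)
    assume "\<not> p \<bullet> W + q * \<sigma> W \<ge> 0"
    then have neg: "p \<bullet> W + q * \<sigma> W < 0" by simp
    define \<delta> where "\<delta> = - (p \<bullet> W + q * \<sigma> W) / (2 * q)"
    have \<delta>: "\<delta> > 0" using neg qp by (simp add: \<delta>_def divide_pos_pos)
    have "p \<bullet> W + q * (\<sigma> W + \<delta>) \<ge> b" by (rule At) (use \<delta> in simp)
    moreover have "p \<bullet> W + q * (\<sigma> W + \<delta>) = (p \<bullet> W + q * \<sigma> W) / 2"
      using qp by (simp add: \<delta>_def field_simps)
    ultimately show False using neg b0 by simp
  qed
  show ?thesis
  proof (intro exI[of _ "- (1/q) *\<^sub>R p"] conjI allI ballI)
    fix W
    have "(- (1/q) *\<^sub>R p) \<bullet> W = - (p \<bullet> W) / q" by simp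
    also have "\<dots> \<le> \<sigma> W" using key[of W] qp by (simp add: field_simps)
    finally show "(- (1/q) *\<^sub>R p) \<bullet> W \<le> \<sigma> W" .
  next
    fix W assume "W \<in> T"
    then show "(- (1/q) *\<^sub>R p) \<bullet> W = 0" using pT0 by simp
  qed
qed

lemma hub_nonneg: "r > 0 \<Longrightarrow> hub r M \<ge> 0"
  by (auto simp: hub_def)

lemma hub_le: "r > 0 \<Longrightarrow> hub r M \<le> norm M + r/2"
proof -
  assume r: "r > 0"
  show ?thesis
  proof (cases "norm M \<ge> r")
    case True then show ?thesis using r by (simp add: hub_def)
  next
    case False
    have "norm M * norm M \<le> norm M * r" using False by (intro mult_left_mono) auto
    then have "(norm M)^2 / (2*r) \<le> norm M / 2" using r
      by (simp add: divide_simps power2_eq_square)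
    then have "(norm M)^2 / (2*r) + r/2 \<le> norm M + r/2" using norm_ge_zero[of M] by linarith
    then show ?thesis using False unfolding hub_def by simp
  qed
qed

lemma hub_mono:
  assumes r': "0 < r'" and rr: "r' \<le> r"
  shows "hub r' M \<le> hub r M"
proof -
  define n where "n = norm M"
  have n0: "n \<ge> 0" by (simp add: n_def)
  have r: "r > 0" using r' rr by simp
  consider "n \<ge> r" | "r' \<le> n" "n < r" | "n < r'" by linarith
  then show ?thesis
  proof cases
    case 1 then show ?thesis using rr by (simp add: hub_def n_def[symmetric])
  next
    case 2
    have "n^2/(2*r) + r/2 - n = (n - r)^2 / (2*r)" using r by (simp add: field_simps power2_eq_square)
    moreover have "(n - r)^2 / (2*r) \<ge> 0" using r by simp
    ultimately show ?thesis using 2 by (simp add: hub_def n_def[symmetric])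
  next
    case 3
    have "(n^2/(2*r) + r/2) - (n^2/(2*r') + r'/2) = (r - r') * (r*r' - n^2) / (2*r*r')"
      using r r' by (simp add: field_simps power2_eq_square)
    moreover have "r*r' - n^2 \<ge> 0"
    proof -
      have "n*n \<le> r'*r'" using 3 n0 by (intro mult_mono) auto
      also have "\<dots> \<le> r*r'" using rr r' by (intro mult_right_mono) auto
      finally show ?thesis by (simp add: power2_eq_square)
    qed
    moreover have "(r - r') * (r*r' - n^2) / (2*r*r') \<ge> 0" using calculation(2) rr r r' by simp
    ultimately show ?thesis using 3 rr by (simp add: hub_def n_def[symmetric])
  qed
qed

lemma le_eps_nonneg:
  fixes x c :: real
  assumes c: "c \<ge> 0" and h: "\<And>t. 0 < t \<Longrightarrow> t \<le> 1 \<Longrightarrow> x + t * c \<ge> 0"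
  shows "x \<ge> 0"
proof (rule ccontr)
  assume "\<not> x \<ge> 0"
  then have x: "x < 0" by simp
  define t where "t = min 1 (- x / (2 * (c + 1)))"
  have "- x / (2 * (c + 1)) > 0" using x c by (intro divide_pos_pos) auto
  then have t0: "t > 0" by (simp add: t_def)
  have t1: "t \<le> 1" by (simp add: t_def)
  have "t * c \<le> t * (c + 1)" using t0 by simp
  also have "\<dots> \<le> (- x / (2 * (c + 1))) * (c + 1)" using c by (intro mult_right_mono) (auto simp: t_def)
  also have "\<dots> = - x / 2" using c by (simp add: field_simps)
  finally have "x + t * c < 0" using x by simp
  then show False using h[OF t0 t1] by simp
qed

lemma lin_aux: "(a::real) \<le> b + c + d \<Longrightarrow> e \<le> f + g + h + i \<Longrightarrow> a + e \<le> b + f + (c + g) + (d + h + i)"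
  by linarith

locale prob =
  fixes u s :: "real^'r^'d \<Rightarrow> real"
    and Sh :: "real^'d^'d"
    and Ret :: "real^'r^'d \<Rightarrow> real^'r^'d \<Rightarrow> real^'r^'d"
    and \<rho> Lu Ls \<mu>0 :: real
  assumes u_diff: "\<forall>X. u differentiable (at X)"
    and u_lip: "Lu-lipschitz_on UNIV (egrad u)"
    and s_conv: "convex_on UNIV s"
    and s_lip: "Ls-lipschitz_on UNIV s"
    and \<rho>_pos: "0 < \<rho>"
    and ret: "retraction Ret"
    and \<mu>0_pos: "0 < \<mu>0"
begin

definition "nX = sqrt (real CARD('r))"
definition "Gu = norm (egrad u 0) + Lu * nX"
definition "Gw = 4 * \<rho> * nX * norm Sh"
definition "GG = Gu + Gw"
definition "BB = 2 * \<mu>0 * (GG + Ls)"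
definition "MM = (SOME M. M \<ge> 0 \<and> (\<forall>X\<in>stiefel. \<forall>D\<in>tangent X. norm D \<le> BB \<longrightarrow> norm (Ret X D - X - D) \<le> M * (norm D)^2))"
definition "K1 = Lu + 2 * \<rho> * norm Sh"
definition "K2 = 4 * \<rho> * (2 * nX * norm Sh)^2"
definition "abar = 1 / (4 * (\<mu>0 * (GG + Ls) * MM + (\<mu>0 * K1 + K2) * (1 + MM * BB)^2 + 1))"

lemma Lu0: "Lu \<ge> 0" using u_lip lipschitz_on_nonneg by blast
lemma Ls0: "Ls \<ge> 0" using s_lip lipschitz_on_nonneg by blast
lemma nX0: "nX \<ge> 0" by (simp add: nX_def)
lemma Gu0: "Gu \<ge> 0" using Lu0 nX0 by (simp add: Gu_def)
lemma Gw0: "Gw \<ge> 0" using \<rho>_pos nX0 by (simp add: Gw_def)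
lemma GG0: "GG \<ge> 0" using Gu0 Gw0 by (simp add: GG_def)
lemma BB0: "BB \<ge> 0" using GG0 Ls0 \<mu>0_pos by (simp add: BB_def)
lemma MM: "MM \<ge> 0" "\<And>X D. X \<in> stiefel \<Longrightarrow> D \<in> tangent X \<Longrightarrow> norm D \<le> BB \<Longrightarrow> norm (Ret X D - X - D) \<le> MM * (norm D)^2"
proof -
  have "\<exists>M\<ge>0. \<forall>X\<in>stiefel. \<forall>D\<in>tangent X. norm D \<le> BB \<longrightarrow> norm (Ret X D - X - D) \<le> M * (norm D)^2"
    by (rule retraction_second_order[OF ret BB0])
  then have "MM \<ge> 0 \<and> (\<forall>X\<in>stiefel. \<forall>D\<in>tangent X. norm D \<le> BB \<longrightarrow> norm (Ret X D - X - D) \<le> MM * (norm D)^2)"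
    unfolding MM_def by (rule someI_ex)
  then show "MM \<ge> 0" "\<And>X D. X \<in> stiefel \<Longrightarrow> D \<in> tangent X \<Longrightarrow> norm D \<le> BB \<Longrightarrow> norm (Ret X D - X - D) \<le> MM * (norm D)^2"
    by auto
qed
lemma K10: "K1 \<ge> 0" using Lu0 \<rho>_pos by (simp add: K1_def)
lemma K20: "K2 \<ge> 0" using \<rho>_pos by (simp add: K2_def)

lemma abar_pos: "abar > 0" "abar \<le> 1"
proof -
  have "\<mu>0 * (GG + Ls) * MM + (\<mu>0 * K1 + K2) * (1 + MM * BB)^2 \<ge> 0"
    using \<mu>0_pos GG0 Ls0 MM(1) K10 K20 BB0 by (intro add_nonneg_nonneg mult_nonneg_nonneg) auto
  then show "abar > 0" "abar \<le> 1" by (auto simp: abar_def field_simps)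
qed

lemma norm_st: "(X::real^'r^'d) \<in> stiefel \<Longrightarrow> norm X = nX"
  by (simp add: norm_stiefel_le nX_def)

lemma gu_bound: "(X::real^'r^'d) \<in> stiefel \<Longrightarrow> norm (egrad u X) \<le> Gu"
  using egrad_u_bound[OF u_lip, of X] norm_st by (simp add: Gu_def)

lemma gw_bound: "(X::real^'r^'d) \<in> stiefel \<Longrightarrow> \<mu> > 0 \<Longrightarrow> norm (egrad (\<lambda>Y. wsm \<rho> Sh Y \<mu>) X) \<le> Gw"
  using egrad_wsm_bound[OF \<rho>_pos, of \<mu> Sh X] norm_st by (simp add: Gw_def)

lemma gsm_grad:
  assumes \<mu>: "\<mu> > 0"
  shows "egrad (\<lambda>Y. gsm u \<rho> Sh Y \<mu>) X = egrad u X + egrad (\<lambda>Y. wsm \<rho> Sh Y \<mu>) X"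
proof -
  have du: "(u has_derivative (\<lambda>H. egrad u X \<bullet> H)) (at X)" using egrad_differentiable u_diff by blast
  have dw: "((\<lambda>Y. wsm \<rho> Sh Y \<mu>) has_derivative (\<lambda>H. egrad (\<lambda>Y. wsm \<rho> Sh Y \<mu>) X \<bullet> H)) (at X)"
    by (rule egrad_wsm(1)[OF \<rho>_pos \<mu>])
  have "((\<lambda>Y. gsm u \<rho> Sh Y \<mu>) has_derivative (\<lambda>H. (egrad u X + egrad (\<lambda>Y. wsm \<rho> Sh Y \<mu>) X) \<bullet> H)) (at X)"
    using has_derivative_add[OF du dw] by (simp add: gsm_def[abs_def] inner_add_left)
  then show ?thesis by (rule egrad_eq)
qed

lemma ga_bound: "(X::real^'r^'d) \<in> stiefel \<Longrightarrow> \<mu> > 0 \<Longrightarrow> norm (egrad (\<lambda>Y. gsm u \<rho> Sh Y \<mu>) X) \<le> GG"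
proof -
  assume X: "X \<in> stiefel" and \<mu>: "\<mu> > 0"
  have "norm (egrad (\<lambda>Y. gsm u \<rho> Sh Y \<mu>) X) = norm (egrad u X + egrad (\<lambda>Y. wsm \<rho> Sh Y \<mu>) X)"
    by (simp add: gsm_grad[OF \<mu>])
  also have "\<dots> \<le> norm (egrad u X) + norm (egrad (\<lambda>Y. wsm \<rho> Sh Y \<mu>) X)" by (rule norm_triangle_ineq)
  also have "\<dots> \<le> Gu + Gw" using gu_bound[OF X] gw_bound[OF X \<mu>] by (rule add_mono)
  finally show ?thesis by (simp add: GG_def)
qed

lemma gsm_desc:
  assumes X: "(X::real^'r^'d) \<in> stiefel" and Y: "Y \<in> stiefel" and \<mu>: "\<mu> > 0"
  shows "gsm u \<rho> Sh Y \<mu> \<le> gsm u \<rho> Sh X \<mu> + egrad (\<lambda>Y. gsm u \<rho> Sh Y \<mu>) X \<bullet> (Y - X) + (K1 + K2 / \<mu>) * (norm (Y - X))^2"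
proof -
  have u1: "u Y \<le> u X + egrad u X \<bullet> (Y - X) + Lu * (norm (Y - X))^2"
    using u_descent[OF u_diff u_lip, of Y X] by linarith
  have w1: "wsm \<rho> Sh Y \<mu> \<le> wsm \<rho> Sh X \<mu> + egrad (\<lambda>Y. wsm \<rho> Sh Y \<mu>) X \<bullet> (Y - X)
     + 2 * \<rho> * norm Sh * (norm (Y - X))^2 + 4 * \<rho> / \<mu> * ((norm X + norm Y) * norm Sh)^2 * (norm (Y - X))^2"
    by (rule wsm_upper[OF \<rho>_pos \<mu>])
  have e: "4 * \<rho> / \<mu> * ((norm X + norm Y) * norm Sh)^2 = K2 / \<mu>"
    using norm_st[OF X] norm_st[OF Y] by (simp add: K2_def)
  have eq: "(K1 + K2/\<mu>) * (norm (Y - X))^2 = Lu * (norm (Y - X))^2 + 2*\<rho>*norm Sh * (norm (Y - X))^2 + K2/\<mu> * (norm (Y - X))^2"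
    by (simp add: K1_def distrib_right)
  have g: "egrad (\<lambda>Y. gsm u \<rho> Sh Y \<mu>) X \<bullet> (Y - X) = egrad u X \<bullet> (Y - X) + egrad (\<lambda>Y. wsm \<rho> Sh Y \<mu>) X \<bullet> (Y - X)"
    by (simp add: gsm_grad[OF \<mu>] inner_add_left)
  have gY: "gsm u \<rho> Sh Y \<mu> = u Y + wsm \<rho> Sh Y \<mu>" and gX: "gsm u \<rho> Sh X \<mu> = u X + wsm \<rho> Sh X \<mu>"
    by (simp_all add: gsm_def)
  show ?thesis unfolding g eq gY gX by (rule lin_aux[OF u1 w1[unfolded e]])
qed

end

lemma tangent0: "0 \<in> tangent X" by (simp add: tangent_def)
lemma tangent_add: "V \<in> tangent X \<Longrightarrow> W \<in> tangent X \<Longrightarrow> V + W \<in> tangent X"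
  by (simp add: tangent_def mm_simps tr_simps algebra_simps)

context prob
begin

abbreviation "ag \<mu> X \<equiv> egrad (\<lambda>Y. gsm u \<rho> Sh Y \<mu>) X"

definition "optc X \<mu> V \<longleftrightarrow> V \<in> tangent X \<and> (\<forall>W\<in>tangent X.
  ag \<mu> X \<bullet> V + (norm V)\<^sup>2 / (2 * \<mu>) + s (X + V) \<le> ag \<mu> X \<bullet> W + (norm W)\<^sup>2 / (2 * \<mu>) + s (X + W))"

lemma s_lipD: "\<bar>s x - s y\<bar> \<le> Ls * norm (x - y)"
  using lipschitz_onD[OF s_lip, of x y] by (simp add: dist_norm dist_real_def)

lemma opt1:
  assumes \<mu>: "\<mu> > 0" and o: "optc X \<mu> V"
  shows "ag \<mu> X \<bullet> V + 3/4 * (norm V)^2 / \<mu> + s (X + V) - s X \<le> 0"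
proof -
  have V: "V \<in> tangent X" using o by (simp add: optc_def)
  have W: "(1/2) *\<^sub>R V \<in> tangent X" by (rule tangent_scale[OF V])
  have o2: "ag \<mu> X \<bullet> V + (norm V)\<^sup>2 / (2 * \<mu>) + s (X + V) \<le> ag \<mu> X \<bullet> ((1/2) *\<^sub>R V) + (norm ((1/2) *\<^sub>R V))\<^sup>2 / (2 * \<mu>) + s (X + (1/2) *\<^sub>R V)"
    using bspec[OF conjunct2[OF o[unfolded optc_def]] W] .
  have cv: "s ((1 - 1/2) *\<^sub>R X + (1/2) *\<^sub>R (X + V)) \<le> (1 - 1/2) * s X + (1/2) * s (X + V)"
    by (rule convex_onD[OF s_conv]) auto
  have hh: "(1/2::real) *\<^sub>R X + (1/2) *\<^sub>R X = X" by (simp add: scaleR_left_distrib[symmetric])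
  have e: "(1 - 1/2) *\<^sub>R X + (1/2) *\<^sub>R (X + V) = X + (1/2) *\<^sub>R V"
    by (simp add: scaleR_add_right add.assoc[symmetric] hh)
  have n: "(norm ((1/2) *\<^sub>R V))\<^sup>2 = (norm V)^2 / 4" by (simp add: power2_eq_square)
  have "ag \<mu> X \<bullet> V + (norm V)\<^sup>2 / (2 * \<mu>) + s (X + V) \<le> (ag \<mu> X \<bullet> V)/2 + (norm V)^2 / (8 * \<mu>) + (s X/2 + s (X + V)/2)"
    using o2 cv unfolding e n by simp
  moreover have "(norm V)\<^sup>2 / (2 * \<mu>) - (norm V)^2 / (8 * \<mu>) = 3/8 * (norm V)^2 / \<mu>" using \<mu> by (simp add: field_simps)
  ultimately show ?thesis by linarith
qed

lemma Vbound:
  assumes X: "X \<in> stiefel" and \<mu>: "\<mu> > 0" "\<mu> \<le> \<mu>0" and o: "optc X \<mu> V"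
  shows "norm V \<le> BB"
proof -
  have h: "ag \<mu> X \<bullet> V + 3/4 * (norm V)^2 / \<mu> + s (X + V) - s X \<le> 0" by (rule opt1[OF \<mu>(1) o])
  have a: "- (ag \<mu> X \<bullet> V) \<le> GG * norm V"
  proof -
    have "- (ag \<mu> X \<bullet> V) \<le> norm (ag \<mu> X) * norm V" using Cauchy_Schwarz_ineq2[of "ag \<mu> X" V] by linarith
    also have "\<dots> \<le> GG * norm V" by (rule mult_right_mono[OF ga_bound[OF X \<mu>(1)]]) simp
    finally show ?thesis .
  qed
  have b: "s X - s (X + V) \<le> Ls * norm V" using s_lipD[of X "X + V"] by simp
  have "3/4 * (norm V)^2 / \<mu> \<le> (GG + Ls) * norm V" using h a b by (simp add: algebra_simps)
  then have "3/4 * (norm V * norm V) \<le> \<mu> * ((GG + Ls) * norm V)" using \<mu> by (simp add: field_simps power2_eq_square)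
  then have c: "norm V * (3/4 * norm V) \<le> norm V * (\<mu> * (GG + Ls))" by (simp add: algebra_simps)
  have "3/4 * norm V \<le> \<mu> * (GG + Ls)"
  proof (cases "norm V = 0")
    case True then show ?thesis using \<mu> GG0 Ls0 by simp
  next
    case False then show ?thesis by (intro mult_left_le_imp_le[OF c]) simp
  qed
  moreover have "\<mu> * (GG + Ls) \<le> \<mu>0 * (GG + Ls)" using \<mu> GG0 Ls0 by (intro mult_right_mono) auto
  moreover have "\<mu>0 * (GG + Ls) \<ge> 0" using GG0 Ls0 \<mu>0_pos by simp
  moreover have "BB = 2 * (\<mu>0 * (GG + Ls))" by (simp add: BB_def)
  ultimately show ?thesis by linarith
qed

lemma fsm_mono:
  assumes "0 < \<mu>'" "\<mu>' \<le> \<mu>"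
  shows "fsm u s \<rho> Sh X \<mu>' \<le> fsm u s \<rho> Sh X \<mu>"
proof -
  have "hub (\<mu>'/2) (hmap Sh X) \<le> hub (\<mu>/2) (hmap Sh X)" using assms by (intro hub_mono) auto
  then have "wsm \<rho> Sh X \<mu>' \<le> wsm \<rho> Sh X \<mu>"
    using assms \<rho>_pos by (simp add: wsm_hub)
  then show ?thesis by (simp add: fsm_def gsm_def)
qed

definition "flo = u 0 - norm (egrad u 0) * nX - Lu * nX^2 + s 0 - Ls * nX"
definition "fhi = u 0 + norm (egrad u 0) * nX + Lu * nX^2 + s 0 + Ls * nX
   + 2 * \<rho> * ((norm (mat 1 :: real^'d^'d) + nX^2) * norm Sh + \<mu>0 / 4)"

lemma u_bounds:
  assumes X: "(X::real^'r^'d) \<in> stiefel"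
  shows "\<bar>u X - u 0\<bar> \<le> norm (egrad u 0) * nX + Lu * nX^2"
proof -
  have "\<bar>u X - u 0 - egrad u 0 \<bullet> (X - 0)\<bar> \<le> Lu * (norm (X - 0))^2" by (rule u_descent[OF u_diff u_lip])
  moreover have "\<bar>egrad u 0 \<bullet> X\<bar> \<le> norm (egrad u 0) * nX" using Cauchy_Schwarz_ineq2[of "egrad u 0" X] norm_st[OF X] by simp
  ultimately show ?thesis using norm_st[OF X] by simp
qed

lemma fsm_lower:
  assumes X: "(X::real^'r^'d) \<in> stiefel" and \<mu>: "\<mu> > 0"
  shows "flo \<le> fsm u s \<rho> Sh X \<mu>"
proof -
  have "hub (\<mu>/2) (hmap Sh X) \<ge> 0" by (rule hub_nonneg) (use \<mu> in simp)
  then have w: "wsm \<rho> Sh X \<mu> \<ge> 0" using wsm_hub[OF \<rho>_pos \<mu>, of Sh X] \<rho>_pos by simp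
  have s: "s X \<ge> s 0 - Ls * nX" using s_lipD[of X 0] norm_st[OF X] by simp
  show ?thesis using u_bounds[OF X] w s by (simp add: fsm_def gsm_def flo_def)
qed

lemma fsm_upper:
  assumes X: "(X::real^'r^'d) \<in> stiefel" and \<mu>: "\<mu> > 0" "\<mu> \<le> \<mu>0"
  shows "fsm u s \<rho> Sh X \<mu> \<le> fhi"
proof -
  have hX: "norm (hmap Sh X) \<le> (norm (mat 1 :: real^'d^'d) + nX^2) * norm Sh"
  proof -
    have "norm (hmap Sh X) \<le> norm (mat 1 - X ** transpose X) * norm Sh" unfolding hmap_def by (rule norm_mm_le)
    also have "\<dots> \<le> (norm (mat 1 :: real^'d^'d) + nX^2) * norm Sh"
    proof (rule mult_right_mono)
      have "norm (mat 1 - X ** transpose X) \<le> norm (mat 1 :: real^'d^'d) + norm (X ** transpose X)" by (rule norm_triangle_ineq4)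
      also have "\<dots> \<le> norm (mat 1 :: real^'d^'d) + nX^2"
        using norm_mm_le[of X "transpose X"] norm_st[OF X] by (simp add: norm_transpose power2_eq_square)
      finally show "norm (mat 1 - X ** transpose X) \<le> norm (mat 1 :: real^'d^'d) + nX^2" .
    qed simp
    finally show ?thesis .
  qed
  have w: "wsm \<rho> Sh X \<mu> \<le> 2 * \<rho> * ((norm (mat 1 :: real^'d^'d) + nX^2) * norm Sh + \<mu>0 / 4)"
  proof -
    have "hub (\<mu>/2) (hmap Sh X) \<le> norm (hmap Sh X) + \<mu>/4" using hub_le[of "\<mu>/2"] \<mu> by simp
    also have "\<dots> \<le> (norm (mat 1 :: real^'d^'d) + nX^2) * norm Sh + \<mu>0 / 4" using hX \<mu> by simp
    finally have hb: "hub (\<mu>/2) (hmap Sh X) \<le> (norm (mat 1 :: real^'d^'d) + nX^2) * norm Sh + \<mu>0 / 4" .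
    show ?thesis unfolding wsm_hub[OF \<rho>_pos \<mu>(1), of Sh X] using hb \<rho>_pos by (intro mult_left_mono) auto
  qed
  have s: "s X \<le> s 0 + Ls * nX" using s_lipD[of X 0] norm_st[OF X] by simp
  show ?thesis using u_bounds[OF X] w s by (simp add: fsm_def gsm_def fhi_def)
qed

end

context prob
begin

lemma linesearch:
  assumes X: "(X::real^'r^'d) \<in> stiefel" and \<mu>: "\<mu> > 0" "\<mu> \<le> \<mu>0" and o: "optc X \<mu> V"
    and t: "0 < t" "t \<le> abar"
  shows "fsm u s \<rho> Sh (Ret X (t *\<^sub>R V)) \<mu> \<le> fsm u s \<rho> Sh X \<mu> - t / (2 * \<mu>) * (norm V)^2"
proof -
  have V: "V \<in> tangent X" using o by (simp add: optc_def)
  have t1: "t \<le> 1" using t abar_pos by simp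
  define n where "n = norm V"
  have n0: "n \<ge> 0" by (simp add: n_def)
  have nB: "n \<le> BB" unfolding n_def by (rule Vbound[OF X \<mu> o])
  define D where "D = t *\<^sub>R V"
  have DT: "D \<in> tangent X" unfolding D_def by (rule tangent_scale[OF V])
  have nD: "norm D = t * n" using t by (simp add: D_def n_def)
  have tn: "t * n \<le> n" using mult_right_mono[OF t1 n0] by simp
  have DB: "norm D \<le> BB" using nD tn nB by simp
  define Y where "Y = Ret X D"
  have Y: "Y \<in> stiefel" using ret X DT unfolding retraction_def Y_def by blast
  define R where "R = Y - X - D"
  have nR: "norm R \<le> MM * (t * n)^2" unfolding R_def Y_def using MM(2)[OF X DT DB] nD by simp
  define a where "a = ag \<mu> X"
  have na: "norm a \<le> GG" unfolding a_def by (rule ga_bound[OF X \<mu>(1)])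
  have E: "Y - X = D + R" by (simp add: R_def)
  have nE: "norm (Y - X) \<le> (1 + MM * BB) * (t * n)"
  proof -
    have "norm (Y - X) \<le> norm D + norm R" unfolding E by (rule norm_triangle_ineq)
    also have "\<dots> \<le> t * n + MM * (t * n) * (t * n)" using nD nR by (simp add: power2_eq_square mult.assoc)
    also have "\<dots> \<le> t * n + MM * BB * (t * n)"
      using MM(1) DB nD t n0 by (intro add_left_mono mult_right_mono mult_left_mono) auto
    finally show ?thesis by (simp add: algebra_simps)
  qed
  have nE2: "(norm (Y - X))^2 \<le> (1 + MM * BB)^2 * (t * n)^2"
    using power_mono[OF nE, of 2] by (simp add: power_mult_distrib)
  have g1: "gsm u \<rho> Sh Y \<mu> \<le> gsm u \<rho> Sh X \<mu> + a \<bullet> (Y - X) + (K1 + K2 / \<mu>) * (norm (Y - X))^2"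
    unfolding a_def by (rule gsm_desc[OF X Y \<mu>(1)])
  have g2: "(K1 + K2 / \<mu>) * (norm (Y - X))^2 \<le> (K1 + K2 / \<mu>) * ((1 + MM * BB)^2 * (t * n)^2)"
    using K10 K20 \<mu> by (intro mult_left_mono[OF nE2]) auto
  have aE: "a \<bullet> (Y - X) \<le> t * (a \<bullet> V) + GG * MM * (t * n)^2"
  proof -
    have "a \<bullet> (Y - X) = t * (a \<bullet> V) + a \<bullet> R" unfolding E by (simp add: D_def inner_add_right)
    moreover have "a \<bullet> R \<le> GG * MM * (t * n)^2"
    proof -
      have "a \<bullet> R \<le> norm a * norm R" by (rule norm_cauchy_schwarz)
      also have "\<dots> \<le> GG * (MM * (t * n)^2)" using na nR GG0 by (intro mult_mono) auto
      finally show ?thesis by (simp add: mult.assoc)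
    qed
    ultimately show ?thesis by linarith
  qed
  have sY: "s Y \<le> (1 - t) * s X + t * s (X + V) + Ls * MM * (t * n)^2"
  proof -
    have "s Y - s (X + D) \<le> Ls * norm (Y - (X + D))" using s_lipD[of Y "X + D"] by simp
    also have "\<dots> = Ls * norm R" by (simp add: R_def algebra_simps)
    also have "\<dots> \<le> Ls * (MM * (t * n)^2)" using nR Ls0 by (intro mult_left_mono) auto
    finally have 1: "s Y \<le> s (X + D) + Ls * MM * (t * n)^2" by (simp add: mult.assoc)
    have "s ((1 - t) *\<^sub>R X + t *\<^sub>R (X + V)) \<le> (1 - t) * s X + t * s (X + V)"
      by (rule convex_onD[OF s_conv]) (use t t1 in auto)
    moreover have "(1 - t) *\<^sub>R X + t *\<^sub>R (X + V) = X + D"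
      by (simp add: D_def scaleR_add_right algebra_simps)
    ultimately show ?thesis using 1 by simp
  qed
  have op: "a \<bullet> V + 3/4 * n^2 / \<mu> + s (X + V) - s X \<le> 0"
    unfolding a_def n_def by (rule opt1[OF \<mu>(1) o])
  define Qc where "Qc = (GG + Ls) * MM + (K1 + K2 / \<mu>) * (1 + MM * BB)^2"
  define P where "P = \<mu>0 * (GG + Ls) * MM + (\<mu>0 * K1 + K2) * (1 + MM * BB)^2"
  have P0: "P \<ge> 0" unfolding P_def
    using \<mu>0_pos GG0 Ls0 MM(1) K10 K20 BB0 by (intro add_nonneg_nonneg mult_nonneg_nonneg) auto
  have muQ: "\<mu> * Qc \<le> P"
  proof -
    have "\<mu> * Qc = \<mu> * (GG + Ls) * MM + (\<mu> * K1 + K2) * (1 + MM * BB)^2"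
      using \<mu> by (simp add: Qc_def field_simps)
    also have "\<dots> \<le> P" unfolding P_def
      using \<mu> GG0 Ls0 MM(1) K10 K20
      by (intro add_mono mult_right_mono mult_left_mono) auto
    finally show ?thesis .
  qed
  have Qc0: "Qc \<ge> 0" unfolding Qc_def
    using \<mu> GG0 Ls0 MM(1) K10 K20 BB0 by (intro add_nonneg_nonneg mult_nonneg_nonneg) auto
  have tQ: "t * (\<mu> * Qc) \<le> 1/4"
  proof -
    have "t * (\<mu> * Qc) \<le> abar * P"
      using t muQ P0 Qc0 \<mu> by (intro mult_mono) auto
    also have "\<dots> = P / (4 * (P + 1))" by (simp add: abar_def P_def)
    also have "\<dots> \<le> 1/4" using P0 by (simp add: field_simps)
    finally show ?thesis .
  qed
  have last: "(t * n)^2 * Qc \<le> t * n^2 / (4 * \<mu>)"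
  proof -
    have "(t * n)^2 * Qc = (t * n^2) * (t * (\<mu> * Qc)) / \<mu>" using \<mu> by (simp add: power2_eq_square field_simps)
    also have "\<dots> \<le> (t * n^2) * (1/4) / \<mu>" using tQ t n0 \<mu>
      by (intro divide_right_mono mult_left_mono) auto
    also have "\<dots> = t * n^2 / (4 * \<mu>)" by simp
    finally show ?thesis .
  qed
  have "fsm u s \<rho> Sh Y \<mu> = gsm u \<rho> Sh Y \<mu> + s Y" by (simp add: fsm_def)
  also have "\<dots> \<le> gsm u \<rho> Sh X \<mu> + (t * (a \<bullet> V) + GG * MM * (t * n)^2)
      + (K1 + K2 / \<mu>) * ((1 + MM * BB)^2 * (t * n)^2)
      + ((1 - t) * s X + t * s (X + V) + Ls * MM * (t * n)^2)"
    using g1 g2 aE sY by linarith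
  also have "\<dots> = fsm u s \<rho> Sh X \<mu> + t * (a \<bullet> V + s (X + V) - s X) + (t * n)^2 * Qc"
    by (simp add: fsm_def Qc_def algebra_simps)
  also have "\<dots> \<le> fsm u s \<rho> Sh X \<mu> + t * (- (3/4 * n^2 / \<mu>)) + t * n^2 / (4 * \<mu>)"
  proof -
    have "t * (a \<bullet> V + s (X + V) - s X) \<le> t * (- (3/4 * n^2 / \<mu>))"
      using op t by (intro mult_left_mono) auto
    then show ?thesis using last by linarith
  qed
  also have "\<dots> = fsm u s \<rho> Sh X \<mu> - t / (2 * \<mu>) * n^2" using \<mu> by (simp add: field_simps)
  finally show ?thesis by (simp add: Y_def D_def n_def)
qed

end

context prob
begin

lemma stat:
  assumes X: "(X::real^'r^'d) \<in> stiefel" and \<mu>: "\<mu> > 0" and o: "optc X \<mu> V"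
  shows "\<exists>G\<in>subdiff s (X + V). rgrad u X + rgrad (\<lambda>Y. wsm \<rho> Sh Y \<mu>) X + proj_tan X G = - (1/\<mu>) *\<^sub>R V"
proof -
  have V: "V \<in> tangent X" using o by (simp add: optc_def)
  have oo: "\<And>W. W \<in> tangent X \<Longrightarrow> ag \<mu> X \<bullet> V + (norm V)\<^sup>2 / (2 * \<mu>) + s (X + V) \<le> ag \<mu> X \<bullet> W + (norm W)\<^sup>2 / (2 * \<mu>) + s (X + W)"
    using o by (simp add: optc_def)
  define a where "a = ag \<mu> X"
  define c where "c = a + (1/\<mu>) *\<^sub>R V"
  define Z where "Z = X + V"
  define \<sigma> where "\<sigma> W = s (Z + W) - s Z + c \<bullet> W" for W
  have cv: "convex_on UNIV \<sigma>"
  proof (rule convex_onI)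
    fix t :: real and x y :: "real^'r^'d" assume t: "0 < t" "t < 1"
    have "s ((1 - t) *\<^sub>R (Z + x) + t *\<^sub>R (Z + y)) \<le> (1 - t) * s (Z + x) + t * s (Z + y)"
      by (rule convex_onD[OF s_conv]) (use t in auto)
    moreover have "(1 - t) *\<^sub>R (Z + x) + t *\<^sub>R (Z + y) = Z + ((1 - t) *\<^sub>R x + t *\<^sub>R y)"
      by (simp add: algebra_simps)
    ultimately show "\<sigma> ((1 - t) *\<^sub>R x + t *\<^sub>R y) \<le> (1 - t) * \<sigma> x + t * \<sigma> y"
      by (simp add: \<sigma>_def inner_add_right algebra_simps)
  qed simp
  have s0: "\<sigma> 0 = 0" by (simp add: \<sigma>_def)
  have nn: "\<sigma> W \<ge> 0" if W: "W \<in> tangent X" for W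
  proof (rule le_eps_nonneg[where c="(norm W)^2 / (2 * \<mu>)"])
    show "(norm W)^2 / (2 * \<mu>) \<ge> 0" using \<mu> by simp
    fix t :: real assume t: "0 < t" "t \<le> 1"
    have VW: "V + t *\<^sub>R W \<in> tangent X" by (rule tangent_add[OF V tangent_scale[OF W]])
    have o1: "a \<bullet> V + (norm V)\<^sup>2 / (2 * \<mu>) + s Z \<le> a \<bullet> (V + t *\<^sub>R W) + (norm (V + t *\<^sub>R W))\<^sup>2 / (2 * \<mu>) + s (Z + t *\<^sub>R W)"
      using oo[OF VW] by (simp add: a_def Z_def add.assoc)
    have sc: "s (Z + t *\<^sub>R W) \<le> (1 - t) * s Z + t * s (Z + W)"
    proof -
      have "s ((1 - t) *\<^sub>R Z + t *\<^sub>R (Z + W)) \<le> (1 - t) * s Z + t * s (Z + W)"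
        by (rule convex_onD[OF s_conv]) (use t in auto)
      moreover have "(1 - t) *\<^sub>R Z + t *\<^sub>R (Z + W) = Z + t *\<^sub>R W" by (simp add: algebra_simps)
      ultimately show ?thesis by simp
    qed
    have nv: "(norm (V + t *\<^sub>R W))\<^sup>2 = (norm V)^2 + 2 * t * (V \<bullet> W) + t^2 * (norm W)^2"
      unfolding power2_norm_eq_inner
      by (simp add: inner_add_left inner_add_right inner_commute[of W V] power2_eq_square algebra_simps)
    have "0 \<le> t * (a \<bullet> W) + (2 * t * (V \<bullet> W) + t^2 * (norm W)^2) / (2 * \<mu>) + t * (s (Z + W) - s Z)"
    proof -
      have "(norm (V + t *\<^sub>R W))\<^sup>2 / (2 * \<mu>) = (norm V)^2 / (2 * \<mu>) + (2 * t * (V \<bullet> W) + t^2 * (norm W)^2) / (2 * \<mu>)"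
        unfolding nv by (simp add: add_divide_distrib)
      then show ?thesis using o1 sc by (simp add: inner_add_right algebra_simps)
    qed
    also have "\<dots> = t * (\<sigma> W + t * ((norm W)^2 / (2 * \<mu>)))"
      using \<mu> by (simp add: \<sigma>_def c_def inner_add_left field_simps power2_eq_square)
    finally have "0 \<le> t * (\<sigma> W + t * ((norm W)^2 / (2 * \<mu>)))" .
    then show "0 \<le> \<sigma> W + t * ((norm W)^2 / (2 * \<mu>))" using t by (simp add: zero_le_mult_iff)
  qed
  obtain g where g1: "\<forall>W. g \<bullet> W \<le> \<sigma> W" and g2: "\<forall>W\<in>tangent X. g \<bullet> W = 0"
    using subgrad_sep[OF cv s0 tangent0 tangent_add tangent_scale nn] by blast
  define G where "G = g - c"
  have Gs: "G \<in> subdiff s (X + V)"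
    unfolding subdiff_def
  proof (clarify)
    fix Y
    have "g \<bullet> (Y - Z) \<le> \<sigma> (Y - Z)" using g1 by blast
    then show "s (X + V) + G \<bullet> (Y - (X + V)) \<le> s Y"
      by (simp add: \<sigma>_def G_def Z_def inner_diff_left)
  qed
  have lin: "linear (proj_tan X)" by (rule proj_tan_linear)
  have pg: "proj_tan X g = 0" by (rule proj_normal_zero[OF X g2])
  have pV: "proj_tan X V = V" by (rule proj_of_tangent[OF V])
  have "rgrad u X + rgrad (\<lambda>Y. wsm \<rho> Sh Y \<mu>) X = proj_tan X a"
    unfolding rgrad_def a_def gsm_grad[OF \<mu>] linear_add[OF lin] ..
  moreover have "proj_tan X G = - proj_tan X a - (1/\<mu>) *\<^sub>R V"
    unfolding G_def c_def linear_diff[OF lin] linear_add[OF lin] linear_scale[OF lin] pg pV by simp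
  ultimately show ?thesis using Gs by (intro bexI[of _ G]) auto
qed

end

context prob
begin

lemma run_facts:
  assumes \<theta>: "0 < \<theta>" "\<theta> < 1" and \<beta>: "0 < \<beta>" "\<beta> < 1"
    and run: "smpg_run u s \<rho> Sh Ret \<mu>0 \<theta> \<beta> X V \<mu> \<alpha>"
  shows "\<And>k. X k \<in> stiefel"
    and "\<And>k. 0 < \<mu> k \<and> \<mu> k \<le> \<mu>0"
    and "\<And>k. optc (X k) (\<mu> k) (V k)"
    and "\<And>k. \<alpha> k \<ge> \<beta> * abar \<and> \<alpha> k \<le> 1"
    and "\<And>k. fsm u s \<rho> Sh (X (Suc k)) (\<mu> (Suc k)) \<le> fsm u s \<rho> Sh (X k) (\<mu> k) - \<alpha> k / (2 * \<mu> k) * (norm (V k))^2"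
    and "\<And>k. \<mu> (Suc k) = (if norm (V k) > (\<mu> k)\<^sup>2 then \<mu> k else \<theta> * \<mu> k)"
    and "\<mu> 0 = \<mu>0" "X 0 \<in> stiefel"
proof -
  have R: "X 0 \<in> stiefel" "\<mu> 0 = \<mu>0"
    and Rk: "\<And>k. V k \<in> tangent (X k) \<and>
        (\<forall>W\<in>tangent (X k).
           egrad (\<lambda>Y. gsm u \<rho> Sh Y (\<mu> k)) (X k) \<bullet> V k + (norm (V k))\<^sup>2 / (2 * \<mu> k) + s (X k + V k)
           \<le> egrad (\<lambda>Y. gsm u \<rho> Sh Y (\<mu> k)) (X k) \<bullet> W + (norm W)\<^sup>2 / (2 * \<mu> k) + s (X k + W)) \<and>
        (\<exists>m::nat. \<alpha> k = \<beta> ^ m \<and>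
           fsm u s \<rho> Sh (Ret (X k) (\<beta> ^ m *\<^sub>R V k)) (\<mu> k)
             \<le> fsm u s \<rho> Sh (X k) (\<mu> k) - \<beta> ^ m / (2 * \<mu> k) * (norm (V k))\<^sup>2 \<and>
           (\<forall>m'<m. \<not> (fsm u s \<rho> Sh (Ret (X k) (\<beta> ^ m' *\<^sub>R V k)) (\<mu> k)
             \<le> fsm u s \<rho> Sh (X k) (\<mu> k) - \<beta> ^ m' / (2 * \<mu> k) * (norm (V k))\<^sup>2))) \<and>
        X (Suc k) = Ret (X k) (\<alpha> k *\<^sub>R V k) \<and>
        \<mu> (Suc k) = (if norm (V k) > (\<mu> k)\<^sup>2 then \<mu> k else \<theta> * \<mu> k)"
    using run unfolding smpg_run_def by blast+
  show o: "\<And>k. optc (X k) (\<mu> k) (V k)" using Rk by (simp add: optc_def)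
  show mu: "\<And>k. \<mu> (Suc k) = (if norm (V k) > (\<mu> k)\<^sup>2 then \<mu> k else \<theta> * \<mu> k)" using Rk by blast
  show "\<mu> 0 = \<mu>0" "X 0 \<in> stiefel" using R by auto
  show mupos: "0 < \<mu> k \<and> \<mu> k \<le> \<mu>0" for k
  proof (induction k)
    case 0 then show ?case using R \<mu>0_pos by simp
  next
    case (Suc k)
    have "\<theta> * \<mu> k \<le> \<mu> k" using \<theta> Suc by (simp add: mult_left_le_one_le)
    moreover have "\<theta> * \<mu> k > 0" using \<theta> Suc by simp
    ultimately show ?case
    proof (cases "norm (V k) > (\<mu> k)^2")
      case True then show ?thesis using Suc mu[of k] by simp
    next
      case False
      then have "\<mu> (Suc k) = \<theta> * \<mu> k" using mu[of k] by simp
      then show ?thesis using \<open>\<theta> * \<mu> k \<le> \<mu> k\<close> \<open>\<theta> * \<mu> k > 0\<close> Suc by linarith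
    qed
  qed
  show Xs: "X k \<in> stiefel" for k
  proof (induction k)
    case 0 then show ?case using R by simp
  next
    case (Suc k)
    have "\<alpha> k *\<^sub>R V k \<in> tangent (X k)" using Rk[of k] tangent_scale by blast
    then show ?case using Suc ret Rk[of k] unfolding retraction_def by auto
  qed
  show "\<beta> * abar \<le> \<alpha> k \<and> \<alpha> k \<le> 1" for k
  proof -
    obtain m where m: "\<alpha> k = \<beta> ^ m"
      and nc: "\<forall>m'<m. \<not> (fsm u s \<rho> Sh (Ret (X k) (\<beta> ^ m' *\<^sub>R V k)) (\<mu> k)
             \<le> fsm u s \<rho> Sh (X k) (\<mu> k) - \<beta> ^ m' / (2 * \<mu> k) * (norm (V k))\<^sup>2)"
      using Rk[of k] by blast
    have le1: "\<alpha> k \<le> 1" using m \<beta> by (simp add: power_le_one)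
    show ?thesis
    proof (cases m)
      case 0 then show ?thesis using m \<beta> abar_pos by (simp add: mult_le_one)
    next
      case (Suc m1)
      have "\<not> (\<beta> ^ m1 \<le> abar)"
      proof
        assume a: "\<beta> ^ m1 \<le> abar"
        have "fsm u s \<rho> Sh (Ret (X k) (\<beta> ^ m1 *\<^sub>R V k)) (\<mu> k)
             \<le> fsm u s \<rho> Sh (X k) (\<mu> k) - \<beta> ^ m1 / (2 * \<mu> k) * (norm (V k))\<^sup>2"
          by (rule linesearch[OF Xs mupos[THEN conjunct1] mupos[THEN conjunct2] o]) (use a \<beta> in auto)
        then show False using nc Suc by auto
      qed
      then have "abar < \<beta> ^ m1" by simp
      then have "\<beta> * abar \<le> \<beta> * \<beta> ^ m1" using \<beta> by simp
      then show ?thesis using m Suc le1 by simp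
    qed
  qed
  show "fsm u s \<rho> Sh (X (Suc k)) (\<mu> (Suc k)) \<le> fsm u s \<rho> Sh (X k) (\<mu> k) - \<alpha> k / (2 * \<mu> k) * (norm (V k))^2" for k
  proof -
    obtain m where m: "\<alpha> k = \<beta> ^ m"
      and c: "fsm u s \<rho> Sh (Ret (X k) (\<beta> ^ m *\<^sub>R V k)) (\<mu> k)
             \<le> fsm u s \<rho> Sh (X k) (\<mu> k) - \<beta> ^ m / (2 * \<mu> k) * (norm (V k))\<^sup>2"
      using Rk[of k] by blast
    have X1: "X (Suc k) = Ret (X k) (\<alpha> k *\<^sub>R V k)" using Rk[of k] by blast
    have "\<mu> (Suc k) \<le> \<mu> k" using mu[of k] mupos[of k] \<theta> by (simp add: mult_left_le_one_le)
    then have "fsm u s \<rho> Sh (X (Suc k)) (\<mu> (Suc k)) \<le> fsm u s \<rho> Sh (X (Suc k)) (\<mu> k)"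
      using mupos[of "Suc k"] by (intro fsm_mono) auto
    also have "\<dots> \<le> fsm u s \<rho> Sh (X k) (\<mu> k) - \<alpha> k / (2 * \<mu> k) * (norm (V k))^2"
      using c X1 m by simp
    finally show ?thesis .
  qed
qed

end

context prob
begin

lemma main_result:
  assumes \<theta>: "0 < \<theta>" "\<theta> < 1" and \<beta>: "0 < \<beta>" "\<beta> < 1"
  shows "\<exists>C>0. \<forall>X V \<mu> \<alpha>. smpg_run u s \<rho> Sh Ret \<mu>0 \<theta> \<beta> X V \<mu> \<alpha> \<longrightarrow>
           (\<forall>\<epsilon>. 0 < \<epsilon> \<and> \<epsilon> < 1 \<and> \<epsilon> \<le> \<mu>0 \<longrightarrow>
              (\<exists>k. norm (V k) \<le> (\<mu> k)\<^sup>2 \<and> real k \<le> C * \<epsilon> powr (-3) \<and> \<mu> k \<le> \<epsilon>) \<and>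
              (\<forall>k. norm (V k) \<le> (\<mu> k)\<^sup>2 \<and> \<mu> k \<le> \<epsilon> \<longrightarrow>
                 norm (V k) \<le> \<epsilon>\<^sup>2 \<and> eps_stat_cert u s \<rho> Sh \<epsilon> (X k) (V k) (\<mu> k) \<and>
                 eps_stationary u s \<rho> Sh \<epsilon> (X k)))"
proof -
  define \<Delta> where "\<Delta> = max (fhi - flo) 0"
  define amin where "amin = \<beta> * abar"
  have amin: "amin > 0" using \<beta> abar_pos by (simp add: amin_def)
  have \<Delta>0: "\<Delta> \<ge> 0" by (simp add: \<Delta>_def)
  define C where "C = \<mu>0 / (1 - \<theta>) + 2 * \<Delta> / (amin * \<theta>^3) + 1"
  have t1: "\<mu>0 / (1 - \<theta>) \<ge> 0" using \<mu>0_pos \<theta> by simp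
  have t2: "2 * \<Delta> / (amin * \<theta>^3) \<ge> 0" using \<Delta>0 amin \<theta> by simp
  have C0: "C > 0" unfolding C_def using t1 t2 by linarith
  show ?thesis
  proof (rule exI[of _ C], rule conjI[OF C0], intro allI impI)
    fix X V \<mu> \<alpha> \<epsilon>
    assume run: "smpg_run u s \<rho> Sh Ret \<mu>0 \<theta> \<beta> X V \<mu> \<alpha>" and \<epsilon>: "0 < \<epsilon> \<and> \<epsilon> < 1 \<and> \<epsilon> \<le> \<mu>0"
    note F = run_facts[OF \<theta> \<beta> run]
    have Xs: "\<And>k. X k \<in> stiefel" by (rule F(1))
    have mupos: "\<And>k. 0 < \<mu> k" and mule: "\<And>k. \<mu> k \<le> \<mu>0" using F(2) by auto
    have part2: "\<forall>k. norm (V k) \<le> (\<mu> k)\<^sup>2 \<and> \<mu> k \<le> \<epsilon> \<longrightarrow>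
                 norm (V k) \<le> \<epsilon>\<^sup>2 \<and> eps_stat_cert u s \<rho> Sh \<epsilon> (X k) (V k) (\<mu> k) \<and>
                 eps_stationary u s \<rho> Sh \<epsilon> (X k)"
    proof (intro allI impI)
      fix k assume k: "norm (V k) \<le> (\<mu> k)\<^sup>2 \<and> \<mu> k \<le> \<epsilon>"
      have m2: "(\<mu> k)^2 \<le> \<epsilon>^2" using k mupos[of k] by (intro power_mono) auto
      have ve2: "norm (V k) \<le> \<epsilon>^2" using k m2 by linarith
      have e2: "\<epsilon>^2 \<le> \<epsilon>" using \<epsilon> by (simp add: power2_eq_square mult_left_le_one_le)
      have o: "optc (X k) (\<mu> k) (V k)" by (rule F(3))
      have VT: "V k \<in> tangent (X k)" using o by (simp add: optc_def)
      obtain G where G: "G \<in> subdiff s (X k + V k)"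
        and Ge: "rgrad u (X k) + rgrad (\<lambda>Y. wsm \<rho> Sh Y (\<mu> k)) (X k) + proj_tan (X k) G = - (1/\<mu> k) *\<^sub>R V k"
        using stat[OF Xs mupos o] by blast
      have inS: "- (1/\<mu> k) *\<^sub>R V k \<in> {rgrad u (X k) + rgrad (\<lambda>Y. wsm \<rho> Sh Y (\<mu> k)) (X k) + proj_tan (X k) G | G. G \<in> subdiff s (X k + V k)}"
        using G Ge by (auto intro!: exI[of _ G])
      have "infdist 0 {rgrad u (X k) + rgrad (\<lambda>Y. wsm \<rho> Sh Y (\<mu> k)) (X k) + proj_tan (X k) G | G. G \<in> subdiff s (X k + V k)}
         \<le> dist 0 (- (1/\<mu> k) *\<^sub>R V k)" by (rule infdist_le[OF inS])
      also have "\<dots> = norm (V k) / \<mu> k" using mupos[of k] by simp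
      also have "\<dots> \<le> (\<mu> k)^2 / \<mu> k" using k mupos[of k] by (intro divide_right_mono) auto
      also have "\<dots> = \<mu> k" using mupos[of k] by (simp add: power2_eq_square)
      also have "\<dots> \<le> \<epsilon>" using k by simp
      finally have inf: "infdist 0 {rgrad u (X k) + rgrad (\<lambda>Y. wsm \<rho> Sh Y (\<mu> k)) (X k) + proj_tan (X k) G | G. G \<in> subdiff s (X k + V k)} \<le> \<epsilon>" .
      have cert: "eps_stat_cert u s \<rho> Sh \<epsilon> (X k) (V k) (\<mu> k)"
        unfolding eps_stat_cert_def using VT ve2 e2 mupos[of k] k inf by auto
      show "norm (V k) \<le> \<epsilon>\<^sup>2 \<and> eps_stat_cert u s \<rho> Sh \<epsilon> (X k) (V k) (\<mu> k) \<and> eps_stationary u s \<rho> Sh \<epsilon> (X k)"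
        using ve2 cert Xs[of k] unfolding eps_stationary_def by blast
    qed
    have part1: "\<exists>k. norm (V k) \<le> (\<mu> k)\<^sup>2 \<and> real k \<le> C * \<epsilon> powr (-3) \<and> \<mu> k \<le> \<epsilon>"
    proof (rule ccontr)
      assume nex: "\<not> (\<exists>k. norm (V k) \<le> (\<mu> k)\<^sup>2 \<and> real k \<le> C * \<epsilon> powr (-3) \<and> \<mu> k \<le> \<epsilon>)"
      define e3 where "e3 = 1 / \<epsilon>^3"
      have pe: "\<epsilon> powr (-3) = e3" using \<epsilon> by (simp add: e3_def powr_minus divide_inverse)
      have e30: "e3 > 0" using \<epsilon> by (simp add: e3_def)
      have e1e3: "1 / \<epsilon> \<le> e3"
      proof -
        have "\<epsilon>^3 \<le> \<epsilon>" using \<epsilon> by (simp add: power3_eq_cube mult_le_one mult_left_le_one_le)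
        then show ?thesis using \<epsilon> by (simp add: e3_def frac_le)
      qed
      define N where "N = nat \<lfloor>C * e3\<rfloor>"
      have CN: "real N \<le> C * e3" "C * e3 < real N + 1"
        using C0 e30 by (simp_all add: N_def)
      have H: "\<mu> k > \<epsilon>" if "k \<le> N" "norm (V k) \<le> (\<mu> k)\<^sup>2" for k
      proof (rule ccontr)
        assume "\<not> \<mu> k > \<epsilon>"
        moreover have "real k \<le> C * \<epsilon> powr (-3)" using that CN pe by simp
        ultimately show False using nex that by auto
      qed
      have low: "k \<le> Suc N \<Longrightarrow> \<mu> k \<ge> \<theta> * \<epsilon>" for k
      proof (induction k)
        case 0
        have "\<theta> * \<epsilon> \<le> 1 * \<epsilon>" using \<theta> \<epsilon> by (intro mult_right_mono) auto
        then show ?case using F(7) \<epsilon> by linarith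
      next
        case (Suc k)
        then have kN: "k \<le> N" by simp
        have IH: "\<mu> k \<ge> \<theta> * \<epsilon>" using Suc by simp
        show ?case
        proof (cases "norm (V k) > (\<mu> k)^2")
          case True then show ?thesis using F(6)[of k] IH by simp
        next
          case False
          then have "\<mu> k > \<epsilon>" using H[OF kN] by simp
          then show ?thesis using F(6)[of k] False \<theta> by simp
        qed
      qed
      define P where "P i \<longleftrightarrow> norm (V i) \<le> (\<mu> i)\<^sup>2" for i
      have muf: "\<mu> n = \<mu>0 * \<theta> ^ card {i. i < n \<and> P i}" for n
      proof (induction n)
        case 0 then show ?case using F(7) by simp
      next
        case (Suc n)
        show ?case
        proof (cases "P n")
          case True
          then have "{i. i < Suc n \<and> P i} = insert n {i. i < n \<and> P i}" by auto
          then have "card {i. i < Suc n \<and> P i} = Suc (card {i. i < n \<and> P i})" by simp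
          moreover have "\<mu> (Suc n) = \<theta> * \<mu> n" using F(6)[of n] True by (simp add: P_def)
          ultimately show ?thesis using Suc by simp
        next
          case False
          then have "{i. i < Suc n \<and> P i} = {i. i < n \<and> P i}" using less_Suc_eq by auto
          moreover have "\<mu> (Suc n) = \<mu> n" using F(6)[of n] False by (simp add: P_def)
          ultimately show ?thesis using Suc by simp
        qed
      qed
      define A where "A = {i. i < Suc N \<and> P i}"
      define B where "B = {i. i < Suc N \<and> \<not> P i}"
      have AB: "card A + card B = Suc N"
      proof -
        have "A \<union> B = {..<Suc N}" "A \<inter> B = {}" by (auto simp: A_def B_def)
        moreover have "finite A" "finite B" by (auto simp: A_def B_def)
        ultimately show ?thesis using card_Un_disjoint[of A B] by simp
      qed
      have cA: "real (card A) \<le> \<mu>0 / ((1 - \<theta>) * \<epsilon>)"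
      proof -
        define n where "n = card A"
        have "\<mu>0 * \<theta> ^ n \<ge> \<theta> * \<epsilon>" using low[of "Suc N"] muf[of "Suc N"] by (simp add: n_def A_def)
        define x where "x = 1/\<theta> - 1"
        have x0: "x \<ge> 0" using \<theta> by (simp add: x_def)
        have b: "1 + real n * x \<le> (1 + x) ^ n" by (rule Bernoulli_inequality) (use x0 in simp)
        have "(1 + x) ^ n * \<theta> ^ n = 1" using \<theta> by (simp add: x_def power_mult_distrib[symmetric])
        have "(1 + real n * x) * (\<theta> * \<epsilon>) \<le> (1 + x) ^ n * (\<mu>0 * \<theta> ^ n)"
          by (rule mult_mono[OF b \<open>\<mu>0 * \<theta> ^ n \<ge> \<theta> * \<epsilon>\<close>]) (use \<theta> \<epsilon> x0 in auto)
        also have "\<dots> = \<mu>0" using \<open>(1 + x) ^ n * \<theta> ^ n = 1\<close> by (simp add: algebra_simps)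
        finally have "(1 + real n * x) * (\<theta> * \<epsilon>) \<le> \<mu>0" .
        moreover have "(1 + real n * x) * (\<theta> * \<epsilon>) = \<theta> * \<epsilon> + real n * (x * \<theta>) * \<epsilon>" by (simp add: algebra_simps)
        moreover have "\<theta> * \<epsilon> > 0" using \<theta> \<epsilon> by simp
        ultimately have "real n * (x * \<theta>) * \<epsilon> \<le> \<mu>0" by linarith
        moreover have "x * \<theta> = 1 - \<theta>" using \<theta> by (simp add: x_def field_simps)
        then have "real n * (x * \<theta>) * \<epsilon> = real n * ((1 - \<theta>) * \<epsilon>)" by simp
        ultimately have "real n * ((1 - \<theta>) * \<epsilon>) \<le> \<mu>0" by linarith
        then show ?thesis using \<theta> \<epsilon> by (simp add: n_def field_simps)
      qed
      define d where "d k = \<alpha> k / (2 * \<mu> k) * (norm (V k))^2" for k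
      have d0: "d k \<ge> 0" for k using F(4)[of k] amin mupos[of k] by (simp add: d_def amin_def[symmetric])
      have tele: "(\<Sum>k<n. d k) \<le> fsm u s \<rho> Sh (X 0) (\<mu> 0) - fsm u s \<rho> Sh (X n) (\<mu> n)" for n
      proof (induction n)
        case 0 then show ?case by simp
      next
        case (Suc n) then show ?case using F(5)[of n] by (simp add: d_def)
      qed
      have sumD: "(\<Sum>k<Suc N. d k) \<le> \<Delta>"
      proof -
        have "fsm u s \<rho> Sh (X 0) (\<mu> 0) \<le> fhi" by (rule fsm_upper[OF Xs mupos mule])
        moreover have "flo \<le> fsm u s \<rho> Sh (X (Suc N)) (\<mu> (Suc N))" by (rule fsm_lower[OF Xs mupos])
        ultimately show ?thesis using tele[of "Suc N"] by (simp add: \<Delta>_def)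
      qed
      have dB: "d k \<ge> amin * (\<theta> * \<epsilon>)^3 / 2" if k: "k \<in> B" for k
      proof -
        have kN: "k \<le> Suc N" and nP: "norm (V k) > (\<mu> k)^2" using k by (auto simp: B_def P_def)
        have mk: "\<mu> k \<ge> \<theta> * \<epsilon>" by (rule low[OF kN])
        have te: "\<theta> * \<epsilon> > 0" using \<theta> \<epsilon> by simp
        have v4: "(norm (V k))^2 \<ge> (\<mu> k)^4"
        proof -
          have "((\<mu> k)^2)^2 \<le> (norm (V k))^2" using nP by (intro power_mono) auto
          then show ?thesis by simp
        qed
        have "amin * (\<theta> * \<epsilon>)^3 / 2 \<le> amin * (\<mu> k)^3 / 2"
          using mk te amin by (intro divide_right_mono mult_left_mono power_mono) auto
        also have "\<dots> = amin / (2 * \<mu> k) * (\<mu> k)^4" using mupos[of k] by (simp add: field_simps power_def)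
        also have "\<dots> \<le> \<alpha> k / (2 * \<mu> k) * (norm (V k))^2"
          using F(4)[of k] v4 amin mupos[of k] by (intro mult_mono divide_right_mono) (auto simp: amin_def)
        finally show ?thesis by (simp add: d_def)
      qed
      have cB: "real (card B) * (amin * (\<theta> * \<epsilon>)^3 / 2) \<le> \<Delta>"
      proof -
        have "real (card B) * (amin * (\<theta> * \<epsilon>)^3 / 2) = (\<Sum>k\<in>B. amin * (\<theta> * \<epsilon>)^3 / 2)" by simp
        also have "\<dots> \<le> (\<Sum>k\<in>B. d k)" by (rule sum_mono[OF dB])
        also have "\<dots> \<le> (\<Sum>k<Suc N. d k)" by (rule sum_mono2) (auto simp: B_def d0)
        also have "\<dots> \<le> \<Delta>" by (rule sumD)
        finally show ?thesis .
      qed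
      have cB': "real (card B) \<le> 2 * \<Delta> / (amin * \<theta>^3) * e3"
      proof -
        have pos: "amin * (\<theta> * \<epsilon>)^3 / 2 > 0" using amin \<theta> \<epsilon> by simp
        have "real (card B) \<le> \<Delta> / (amin * (\<theta> * \<epsilon>)^3 / 2)" using cB pos by (simp add: le_divide_eq)
        also have "\<dots> = 2 * \<Delta> / (amin * \<theta>^3) * e3" using \<epsilon> \<theta> amin by (simp add: e3_def field_simps power_mult_distrib)
        finally show ?thesis .
      qed
      have cA': "real (card A) \<le> \<mu>0 / (1 - \<theta>) * e3"
      proof -
        have "\<mu>0 / ((1 - \<theta>) * \<epsilon>) = \<mu>0 / (1 - \<theta>) * (1 / \<epsilon>)" by simp
        also have "\<dots> \<le> \<mu>0 / (1 - \<theta>) * e3" using e1e3 \<mu>0_pos \<theta> by (intro mult_left_mono) auto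
        finally show ?thesis using cA by simp
      qed
      have "real (Suc N) \<le> \<mu>0 / (1 - \<theta>) * e3 + 2 * \<Delta> / (amin * \<theta>^3) * e3"
        using AB cA' cB' by (metis of_nat_add add_mono)
      also have "\<dots> < C * e3" using e30 by (simp add: C_def algebra_simps)
      finally show False using CN by simp
    qed
    show "(\<exists>k. norm (V k) \<le> (\<mu> k)\<^sup>2 \<and> real k \<le> C * \<epsilon> powr (-3) \<and> \<mu> k \<le> \<epsilon>) \<and>
              (\<forall>k. norm (V k) \<le> (\<mu> k)\<^sup>2 \<and> \<mu> k \<le> \<epsilon> \<longrightarrow>
                 norm (V k) \<le> \<epsilon>\<^sup>2 \<and> eps_stat_cert u s \<rho> Sh \<epsilon> (X k) (V k) (\<mu> k) \<and>
                 eps_stationary u s \<rho> Sh \<epsilon> (X k))" using part1 part2 by blast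
  qed
qed

end

theorem mainTheorem13:
  fixes u s :: "real^'r^'d \<Rightarrow> real"
    and Sh :: "real^'d^'d"
    and Ret :: "real^'r^'d \<Rightarrow> real^'r^'d \<Rightarrow> real^'r^'d"
    and \<rho> Lu Ls \<mu>0 \<theta> \<beta> :: real
  assumes rd: "1 \<le> CARD('r)" "CARD('r) < CARD('d)"
    and u_diff: "\<forall>X. u differentiable (at X)"
    and u_lip: "Lu-lipschitz_on UNIV (egrad u)"
    and s_conv: "convex_on UNIV s"
    and s_lip: "Ls-lipschitz_on UNIV s"
    and Sh_sym: "transpose Sh = Sh"
    and Sh_psd: "\<forall>x. 0 \<le> x \<bullet> (Sh *v x)"
    and \<rho>_pos: "0 < \<rho>"
    and ret: "retraction Ret"
    and \<mu>0_pos: "0 < \<mu>0"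
    and \<theta>: "0 < \<theta>" "\<theta> < 1"
    and \<beta>: "0 < \<beta>" "\<beta> < 1"
  shows "\<exists>C>0. \<forall>X V \<mu> \<alpha>. smpg_run u s \<rho> Sh Ret \<mu>0 \<theta> \<beta> X V \<mu> \<alpha> \<longrightarrow>
           (\<forall>\<epsilon>. 0 < \<epsilon> \<and> \<epsilon> < 1 \<and> \<epsilon> \<le> \<mu>0 \<longrightarrow>
              (\<exists>k. norm (V k) \<le> (\<mu> k)\<^sup>2 \<and> real k \<le> C * \<epsilon> powr (-3) \<and> \<mu> k \<le> \<epsilon>) \<and>
              (\<forall>k. norm (V k) \<le> (\<mu> k)\<^sup>2 \<and> \<mu> k \<le> \<epsilon> \<longrightarrow>
                 norm (V k) \<le> \<epsilon>\<^sup>2 \<and> eps_stat_cert u s \<rho> Sh \<epsilon> (X k) (V k) (\<mu> k) \<and>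
                 eps_stationary u s \<rho> Sh \<epsilon> (X k)))"
  proof -
  interpret P: prob u s Sh Ret \<rho> Lu Ls \<mu>0
    by (unfold_locales) (use u_diff u_lip s_conv s_lip \<rho>_pos ret \<mu>0_pos in auto)
  show ?thesis by (rule P.main_result[OF \<theta> \<beta>])
qed

end
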